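(* Let $q=1-p=o\!\left(\frac1n\right)$ and $qn^{1.5}\to\infty$ as $n\to\infty$. Then for all sufficiently large $n\in\mathbb{N}$ we have $u_2(n,p)=u_2'(n,p)=4$.
   Context: $G(n,p)$ is the Erdős–Rényi random graph on $n$ labelled vertices (vertex set $V$), each edge present independently with probability $p=p(n)$; $\mathbb{P}_{n,p}$ is the corresponding probability and $q=1-p$. A diameter graph in $\mathbb{R}^d$ is a graph $(V,E)$ with $V\subset\mathbb{R}^d$ finite and $E=\{\{\mathbf{x},\mathbf{y}\}\subseteq V: |\mathbf{x}-\mathbf{y}|=\operatorname{diam}V\}$, where $\operatorname{diam}V=\max_{\mathbf{x},\mathbf{y}\in V}|\mathbf{x}-\mathbf{y}|$ (Euclidean norm); a graph is a diameter graph in $\mathbb{R}^d$ if it is isomorphic to one. $u_d(n,p)$ is the largest positive integer $k$ such that $\mathbb{P}_{n,p}\big(\exists W\subseteq V,\ |W|=k,\ G[W]$ is a diameter graph in $\mathbb{R}^d$ and $\chi(G[W])=d+1\big)>\frac12$, where $G[W]$ is the induced subgraph; if no such $k$ exists, $u_d(n,p)=0$. $u_d'(n,p)$ is defined identically with the additional requirement that $G[W]$ be connected. *)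

theory Defs
  imports "HOL-Analysis.Analysis" "HOL-Library.Landau_Symbols"
begin

text \<open>Vertex set of G(n,p) is {0..<n}; a graph is given by its edge set,
  a set of 2-element subsets of {0..<n}.\<close>

definition all_edges :: "nat \<Rightarrow> nat set set" where
  "all_edges n = {{i, j} | i j. i < n \<and> j < n \<and> i \<noteq> j}"

definition prob_Gnp :: "nat \<Rightarrow> real \<Rightarrow> (nat set set \<Rightarrow> bool) \<Rightarrow> real" where
  "prob_Gnp n p A =
     (\<Sum>E\<in>{E. E \<subseteq> all_edges n \<and> A E}.
        p ^ card E * (1 - p) ^ (card (all_edges n) - card E))"

definition induced_edges :: "nat set set \<Rightarrow> nat set \<Rightarrow> nat set set" where
  "induced_edges E W = {e \<in> E. e \<subseteq> W}"

text \<open>Euclidean distance in R^d, points represented by their first d coordinates.\<close>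
definition edist :: "nat \<Rightarrow> (nat \<Rightarrow> real) \<Rightarrow> (nat \<Rightarrow> real) \<Rightarrow> real" where
  "edist d x y = sqrt (\<Sum>i<d. (x i - y i)^2)"

definition is_diameter_graph :: "nat \<Rightarrow> 'v set \<Rightarrow> 'v set set \<Rightarrow> bool" where
  "is_diameter_graph d W F \<longleftrightarrow> finite W \<and> W \<noteq> {} \<and>
     (\<exists>f :: 'v \<Rightarrow> (nat \<Rightarrow> real).
        (\<forall>u\<in>W. \<forall>v\<in>W. u \<noteq> v \<longrightarrow> edist d (f u) (f v) \<noteq> 0) \<and>
        F = {{u, v} | u v. u \<in> W \<and> v \<in> W \<and> u \<noteq> v \<and>
               edist d (f u) (f v) = Max ((\<lambda>(a, b). edist d (f a) (f b)) ` (W \<times> W))})"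

definition chromatic_number :: "'v set \<Rightarrow> 'v set set \<Rightarrow> nat" where
  "chromatic_number W F = (LEAST k. \<exists>c :: 'v \<Rightarrow> nat.
      (\<forall>v\<in>W. c v < k) \<and> (\<forall>u\<in>W. \<forall>v\<in>W. u \<noteq> v \<and> {u, v} \<in> F \<longrightarrow> c u \<noteq> c v))"

definition graph_connected :: "'v set \<Rightarrow> 'v set set \<Rightarrow> bool" where
  "graph_connected W F \<longleftrightarrow>
     (\<forall>u\<in>W. \<forall>v\<in>W. (\<lambda>a b. a \<in> W \<and> b \<in> W \<and> a \<noteq> b \<and> {a, b} \<in> F)\<^sup>*\<^sup>* u v)"

definition good_set :: "nat \<Rightarrow> nat set set \<Rightarrow> nat set \<Rightarrow> bool" where
  "good_set d E W \<longleftrightarrow> is_diameter_graph d W (induced_edges E W) \<and>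
      chromatic_number W (induced_edges E W) = d + 1"

definition u_d :: "nat \<Rightarrow> nat \<Rightarrow> real \<Rightarrow> nat" where
  "u_d d n p =
     (let P = (\<lambda>k. 0 < k \<and> prob_Gnp n p (\<lambda>E. \<exists>W \<subseteq> {0..<n}. card W = k \<and> good_set d E W) > 1/2)
      in if \<exists>k. P k then GREATEST k. P k else 0)"

definition u_d' :: "nat \<Rightarrow> nat \<Rightarrow> real \<Rightarrow> nat" where
  "u_d' d n p =
     (let P = (\<lambda>k. 0 < k \<and> prob_Gnp n p (\<lambda>E. \<exists>W \<subseteq> {0..<n}. card W = k \<and> good_set d E W
                     \<and> graph_connected W (induced_edges E W)) > 1/2)
      in if \<exists>k. P k then GREATEST k. P k else 0)"

end

theory Submission
  imports Defs
begin

definition wt :: "real \<Rightarrow> 'a set \<Rightarrow> 'a set \<Rightarrow> real" where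
  "wt p U E = p ^ card E * (1-p) ^ card (U - E)"

definition PU :: "real \<Rightarrow> 'a set \<Rightarrow> ('a set \<Rightarrow> bool) \<Rightarrow> real" where
  "PU p U A = (\<Sum>E\<in>Pow U. wt p U E * (if A E then 1 else 0))"

lemma wt_union:
  assumes "finite U1" "finite U2" "U1 \<inter> U2 = {}" "A \<subseteq> U1" "B \<subseteq> U2"
  shows "wt p (U1 \<union> U2) (A \<union> B) = wt p U1 A * wt p U2 B"
proof -
  have fA: "finite A" "finite B" using assms(1,2,4,5) finite_subset by blast+
  have c1: "card (A \<union> B) = card A + card B"
    using fA assms by (intro card_Un_disjoint) auto
  have "(U1 \<union> U2) - (A \<union> B) = (U1 - A) \<union> (U2 - B)" using assms by auto
  moreover have "card ((U1 - A) \<union> (U2 - B)) = card (U1 - A) + card (U2 - B)"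
    using assms by (intro card_Un_disjoint) auto
  ultimately show ?thesis unfolding wt_def using c1 by (simp add: power_add algebra_simps)
qed

lemma block_sum:
  assumes "finite U1" "finite U2" "U1 \<inter> U2 = {}"
  shows "(\<Sum>E\<in>Pow (U1\<union>U2). wt p (U1\<union>U2) E * f (E\<inter>U1) * g (E\<inter>U2))
       = (\<Sum>E\<in>Pow U1. wt p U1 E * f E) * (\<Sum>E\<in>Pow U2. wt p U2 E * g E)"
proof -
  have bij: "bij_betw (\<lambda>(A,B). A \<union> B) (Pow U1 \<times> Pow U2) (Pow (U1\<union>U2))"
  proof (rule bij_betw_imageI)
    show "inj_on (\<lambda>(A,B). A \<union> B) (Pow U1 \<times> Pow U2)"
    proof (rule inj_onI)
      fix x y assume x: "x \<in> Pow U1 \<times> Pow U2" and y: "y \<in> Pow U1 \<times> Pow U2"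
        and e: "(case x of (A, B) \<Rightarrow> A \<union> B) = (case y of (A, B) \<Rightarrow> A \<union> B)"
      obtain A B where xe: "x = (A,B)" by (cases x)
      obtain A' B' where ye: "y = (A',B')" by (cases y)
      have s: "A \<subseteq> U1" "B \<subseteq> U2" "A' \<subseteq> U1" "B' \<subseteq> U2" using x y xe ye by auto
      have u: "A \<union> B = A' \<union> B'" using e xe ye by simp
      have "A = (A \<union> B) \<inter> U1" using s assms(3) by blast
      also have "\<dots> = (A' \<union> B') \<inter> U1" using u by simp
      also have "\<dots> = A'" using s assms(3) by blast
      finally have 1: "A = A'" .
      have "B = (A \<union> B) \<inter> U2" using s assms(3) by blast
      also have "\<dots> = (A' \<union> B') \<inter> U2" using u by simp
      also have "\<dots> = B'" using s assms(3) by blast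
      finally have 2: "B = B'" .
      show "x = y" using 1 2 xe ye by simp
    qed
  next
    show "(\<lambda>(A,B). A \<union> B) ` (Pow U1 \<times> Pow U2) = Pow (U1\<union>U2)"
    proof
      show "(\<lambda>(A,B). A \<union> B) ` (Pow U1 \<times> Pow U2) \<subseteq> Pow (U1\<union>U2)" by auto
    next
      show "Pow (U1\<union>U2) \<subseteq> (\<lambda>(A,B). A \<union> B) ` (Pow U1 \<times> Pow U2)"
      proof
        fix y assume "y \<in> Pow (U1\<union>U2)"
        then have "y = (\<lambda>(A,B). A \<union> B) (y \<inter> U1, y \<inter> U2)" "(y \<inter> U1, y \<inter> U2) \<in> Pow U1 \<times> Pow U2" by auto
        then show "y \<in> (\<lambda>(A,B). A \<union> B) ` (Pow U1 \<times> Pow U2)" by (metis image_eqI)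
      qed
    qed
  qed
  define h where "h = (\<lambda>E. wt p (U1\<union>U2) E * f (E\<inter>U1) * g (E\<inter>U2))"
  have "(\<Sum>E\<in>Pow (U1\<union>U2). h E) = (\<Sum>x\<in>Pow U1 \<times> Pow U2. h ((\<lambda>(A,B). A \<union> B) x))"
    by (rule sum.reindex_bij_betw[OF bij, symmetric])
  also have "\<dots> = (\<Sum>(A,B)\<in>Pow U1 \<times> Pow U2. (wt p U1 A * f A) * (wt p U2 B * g B))"
  proof (rule sum.cong[OF refl])
    fix x assume x: "x \<in> Pow U1 \<times> Pow U2"
    obtain A B where xAB: "x = (A,B)" by (cases x)
    have i: "(A \<union> B) \<inter> U1 = A" "(A \<union> B) \<inter> U2 = B" using x xAB assms(3) by auto
    have w: "wt p (U1 \<union> U2) (A \<union> B) = wt p U1 A * wt p U2 B"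
      using wt_union[OF assms, of A B p] x xAB by simp
    show "h ((\<lambda>(A,B). A \<union> B) x) = (case x of (A,B) \<Rightarrow> (wt p U1 A * f A) * (wt p U2 B * g B))"
      unfolding h_def xAB by (simp only: prod.case i w mult_ac)
  qed
  also have "\<dots> = (\<Sum>A\<in>Pow U1. \<Sum>B\<in>Pow U2. (wt p U1 A * f A) * (wt p U2 B * g B))"
    by (rule sum.cartesian_product[symmetric])
  also have "\<dots> = (\<Sum>E\<in>Pow U1. wt p U1 E * f E) * (\<Sum>E\<in>Pow U2. wt p U2 E * g E)"
    by (rule sum_product[symmetric])
  finally show ?thesis unfolding h_def .
qed

lemma wt_total:
  assumes "finite U"
  shows "(\<Sum>E\<in>Pow U. wt p U E) = 1"
proof -
  have "(\<Prod>x\<in>U. p + (1-p)) = (\<Sum>X\<in>Pow U. (\<Prod>x\<in>X. p) * (\<Prod>x\<in>U-X. 1-p))"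
    by (rule prod_add[OF assms])
  then show ?thesis unfolding wt_def by simp
qed

lemma wt_nonneg: "0 \<le> p \<Longrightarrow> p \<le> 1 \<Longrightarrow> 0 \<le> wt p U E"
  unfolding wt_def by simp

lemma PU_True: "finite U \<Longrightarrow> PU p U (\<lambda>_. True) = 1"
  unfolding PU_def using wt_total by simp

lemma PU_nonneg: "0 \<le> p \<Longrightarrow> p \<le> 1 \<Longrightarrow> 0 \<le> PU p U A"
  unfolding PU_def by (intro sum_nonneg) (simp add: wt_nonneg)

lemma PU_mono:
  assumes "0 \<le> p" "p \<le> 1" "\<And>E. E \<subseteq> U \<Longrightarrow> A E \<Longrightarrow> B E"
  shows "PU p U A \<le> PU p U B"
  unfolding PU_def using assms by (intro sum_mono) (auto simp: wt_nonneg)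

lemma PU_cong:
  assumes "\<And>E. E \<subseteq> U \<Longrightarrow> A E = B E"
  shows "PU p U A = PU p U B"
  unfolding PU_def using assms by (intro sum.cong) auto

lemma PU_not:
  assumes "finite U"
  shows "PU p U (\<lambda>E. \<not> A E) = 1 - PU p U A"
proof -
  have "PU p U (\<lambda>E. \<not> A E) + PU p U A = (\<Sum>E\<in>Pow U. wt p U E)"
    unfolding PU_def sum.distrib[symmetric] by (intro sum.cong) auto
  then show ?thesis using wt_total[OF assms] by simp
qed

lemma PU_disj:
  "PU p U (\<lambda>E. A E \<or> B E) = PU p U A + PU p U B - PU p U (\<lambda>E. A E \<and> B E)"
  unfolding PU_def sum.distrib[symmetric] sum_subtractf[symmetric] by (intro sum.cong) auto

lemma PU_union:
  assumes "0 \<le> p" "p \<le> 1"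
  shows "PU p U (\<lambda>E. A E \<or> B E) \<le> PU p U A + PU p U B"
  using PU_disj[of p U A B] PU_nonneg[OF assms, of U "\<lambda>E. A E \<and> B E"] by linarith

lemma PU_Union:
  assumes "0 \<le> p" "p \<le> 1" "finite I"
  shows "PU p U (\<lambda>E. \<exists>i\<in>I. A i E) \<le> (\<Sum>i\<in>I. PU p U (A i))"
  using assms(3)
proof (induction I rule: finite_induct)
  case empty
  then show ?case unfolding PU_def by simp
next
  case (insert x F)
  have "PU p U (\<lambda>E. \<exists>i\<in>insert x F. A i E) = PU p U (\<lambda>E. A x E \<or> (\<exists>i\<in>F. A i E))" by simp
  also have "\<dots> \<le> PU p U (A x) + PU p U (\<lambda>E. \<exists>i\<in>F. A i E)" by (rule PU_union[OF assms(1,2)])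
  also have "\<dots> \<le> PU p U (A x) + (\<Sum>i\<in>F. PU p U (A i))" using insert by simp
  finally show ?case using insert by simp
qed

lemma PU_local:
  assumes "finite U" "S \<subseteq> U" "\<And>E. E \<subseteq> U \<Longrightarrow> A E = A (E \<inter> S)"
  shows "PU p U A = PU p S A"
proof -
  have fS: "finite S" using assms finite_subset by auto
  have US: "S \<union> (U - S) = U" using assms by auto
  have "PU p U A = (\<Sum>E\<in>Pow (S \<union> (U-S)). wt p (S \<union> (U-S)) E * (if A (E \<inter> S) then 1 else 0) * (\<lambda>_. 1::real) (E \<inter> (U-S)))"
    unfolding PU_def US using assms(3) by (intro sum.cong) auto
  also have "\<dots> = PU p S A * 1"
    unfolding PU_def
    by (subst block_sum) (use fS assms in \<open>auto intro!: sum.cong simp: wt_total\<close>)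
  finally show ?thesis by simp
qed

lemma PU_all_in:
  assumes "finite U" "S \<subseteq> U"
  shows "PU p U (\<lambda>E. S \<subseteq> E) = p ^ card S"
proof -
  have "PU p U (\<lambda>E. S \<subseteq> E) = PU p S (\<lambda>E. S \<subseteq> E)"
    by (rule PU_local[OF assms]) auto
  also have "\<dots> = (\<Sum>E\<in>Pow S. if E = S then wt p S S else 0)"
    unfolding PU_def by (intro sum.cong) auto
  also have "\<dots> = wt p S S" using finite_subset[OF assms(2,1)] by simp
  finally show ?thesis unfolding wt_def by simp
qed

lemma PU_none_in:
  assumes "finite U" "S \<subseteq> U"
  shows "PU p U (\<lambda>E. \<forall>e\<in>S. e \<notin> E) = (1-p) ^ card S"
proof -
  have "PU p U (\<lambda>E. \<forall>e\<in>S. e \<notin> E) = PU p S (\<lambda>E. \<forall>e\<in>S. e \<notin> E)"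
    by (rule PU_local[OF assms]) auto
  also have "\<dots> = (\<Sum>E\<in>Pow S. if E = {} then wt p S {} else 0)"
    unfolding PU_def by (intro sum.cong) auto
  also have "\<dots> = wt p S {}" using finite_subset[OF assms(2,1)] by simp
  finally show ?thesis unfolding wt_def by simp
qed

lemma rhombus_impossible:
  fixes a1 a2 b1 b2 c1 c2 d1 d2 D :: real
  assumes ab: "(a1-b1)^2+(a2-b2)^2 = D" and bc: "(b1-c1)^2+(b2-c2)^2 = D"
    and cd: "(c1-d1)^2+(c2-d2)^2 = D" and da: "(d1-a1)^2+(d2-a2)^2 = D"
    and ac: "(a1-c1)^2+(a2-c2)^2 \<le> D" and bd: "(b1-d1)^2+(b2-d2)^2 \<le> D"
    and acn: "(a1-c1)^2+(a2-c2)^2 \<noteq> 0" and bdn: "(b1-d1)^2+(b2-d2)^2 \<noteq> 0"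
  shows False
proof -
  define x1 x2 y1 y2 z1 z2 where "x1 = b1 - a1" "x2 = b2 - a2" "y1 = d1 - a1" "y2 = d2 - a2"
    "z1 = c1 - a1" "z2 = c2 - a2"
  define w1 w2 s1 s2 where "w1 = x1 - y1" "w2 = x2 - y2" "s1 = x1 + y1" "s2 = x2 + y2"
  have hx: "x1^2 + x2^2 = D" using ab unfolding x1_x2_y1_y2_z1_z2_def by (simp add: power2_commute)
  have hy: "y1^2 + y2^2 = D" using da unfolding x1_x2_y1_y2_z1_z2_def by (simp add: power2_commute)
  have hxz: "(x1-z1)^2 + (x2-z2)^2 = D" using bc unfolding x1_x2_y1_y2_z1_z2_def by (simp add: power2_commute)
  have hyz: "(y1-z1)^2 + (y2-z2)^2 = D" using cd unfolding x1_x2_y1_y2_z1_z2_def by (simp add: power2_commute)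
  have hz: "z1^2 + z2^2 \<le> D" using ac unfolding x1_x2_y1_y2_z1_z2_def by (simp add: power2_commute)
  have hzn: "z1^2 + z2^2 \<noteq> 0" using acn unfolding x1_x2_y1_y2_z1_z2_def by (simp add: power2_commute)
  have hw: "w1^2 + w2^2 \<le> D" using bd unfolding w1_w2_s1_s2_def x1_x2_y1_y2_z1_z2_def
    by (simp add: algebra_simps power2_eq_square)
  have hwn: "w1^2 + w2^2 \<noteq> 0" using bdn unfolding w1_w2_s1_s2_def x1_x2_y1_y2_z1_z2_def
    by (simp add: algebra_simps power2_eq_square)
  have wz: "w1 * z1 + w2 * z2 = 0" using hx hy hxz hyz unfolding w1_w2_s1_s2_def by (simp add: power2_eq_square algebra_simps)
  have wv: "w1 * s1 + w2 * s2 = 0" using hx hy unfolding w1_w2_s1_s2_def by (simp add: power2_eq_square algebra_simps)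
  have vz: "s1 * z1 + s2 * z2 = z1^2 + z2^2" using hx hy hxz hyz unfolding w1_w2_s1_s2_def by (simp add: power2_eq_square algebra_simps)
  define cr where "cr = z1 * s2 - z2 * s1"
  have c1': "w1 * cr = s2 * (w1 * z1 + w2 * z2) - z2 * (w1 * s1 + w2 * s2)" unfolding cr_def by (simp add: algebra_simps)
  have c1: "w1 * cr = 0" using c1' wz wv by simp
  have c2': "w2 * cr = z1 * (w1 * s1 + w2 * s2) - s1 * (w1 * z1 + w2 * z2)" unfolding cr_def by (simp add: algebra_simps)
  have c2: "w2 * cr = 0" using c2' wz wv by simp
  have "w1 \<noteq> 0 \<or> w2 \<noteq> 0" using hwn by auto
  then have cr0: "cr = 0" using c1 c2 by auto
  have lag: "(s1 * z1 + s2 * z2)^2 + cr^2 = (s1^2+s2^2) * (z1^2+z2^2)" unfolding cr_def by (simp add: power2_eq_square algebra_simps)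
  then have "(z1^2+z2^2) * (z1^2+z2^2) = (s1^2+s2^2) * (z1^2+z2^2)" using vz cr0 by (simp add: power2_eq_square)
  then have vv: "s1^2+s2^2 = z1^2+z2^2" using hzn by (metis mult_right_cancel)
  have "(s1^2+s2^2) + (w1^2+w2^2) = 4 * D" using hx hy unfolding w1_w2_s1_s2_def by (simp add: power2_eq_square algebra_simps)
  moreover have "0 < z1^2+z2^2" using hzn by (simp add: add_nonneg_nonneg sum_power2_gt_zero_iff)
  ultimately show False using vv hz hw by linarith
qed

lemma edist2: "edist 2 x y = sqrt ((x 0 - y 0)^2 + (x 1 - y 1)^2)"
  by (simp add: edist_def numeral_2_eq_2)

lemma no_C4_diam:
  assumes dg: "is_diameter_graph 2 W F"
    and in_W: "a \<in> W" "b \<in> W" "c \<in> W" "d \<in> W" and dist: "a \<noteq> c" "b \<noteq> d"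
    and e: "{a,b} \<in> F" "{b,c} \<in> F" "{c,d} \<in> F" "{d,a} \<in> F"
  shows False
proof -
  obtain f where inj: "\<forall>u\<in>W. \<forall>v\<in>W. u \<noteq> v \<longrightarrow> edist 2 (f u) (f v) \<noteq> 0"
    and F: "F = {{u, v} | u v. u \<in> W \<and> v \<in> W \<and> u \<noteq> v \<and>
               edist 2 (f u) (f v) = Max ((\<lambda>(a, b). edist 2 (f a) (f b)) ` (W \<times> W))}"
    and fin: "finite W"
    using dg unfolding is_diameter_graph_def by blast
  define M where "M = Max ((\<lambda>(a, b). edist 2 (f a) (f b)) ` (W \<times> W))"
  have sym: "edist 2 (f u) (f v) = edist 2 (f v) (f u)" for u v
    unfolding edist2 by (simp add: power2_commute)
  have le: "edist 2 (f u) (f v) \<le> M" if "u \<in> W" "v \<in> W" for u v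
    unfolding M_def using that fin by (intro Max_ge) force+
  have eq: "edist 2 (f u) (f v) = M" if "{u,v} \<in> F" for u v
  proof -
    from that obtain u' v' where "{u,v} = {u',v'}" "edist 2 (f u') (f v') = M"
      unfolding F M_def by blast
    then show ?thesis using sym by (metis doubleton_eq_iff)
  qed
  let ?s = "\<lambda>u v. (f u 0 - f v 0)^2 + (f u 1 - f v 1)^2"
  have sq: "edist 2 (f u) (f v) ^ 2 = ?s u v" for u v
    unfolding edist2 by (simp add: add_nonneg_nonneg)
  have M0: "0 \<le> M" using le[OF in_W(1) in_W(1)] unfolding edist2 by simp
  have A: "?s u v = M^2" if "{u,v} \<in> F" for u v using eq[OF that] sq by metis
  have B: "?s u v \<le> M^2" if "u \<in> W" "v \<in> W" for u v
  proof -
    have "0 \<le> edist 2 (f u) (f v)" unfolding edist2 by simp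
    then have "edist 2 (f u) (f v) ^ 2 \<le> M^2" using power_mono[OF le[OF that]] by simp
    then show ?thesis using sq[of u v] by simp
  qed
  have C: "?s u v \<noteq> 0" if "u \<in> W" "v \<in> W" "u \<noteq> v" for u v
    using inj that unfolding edist2 by auto
  show False
    using rhombus_impossible[OF A[OF e(1)] A[OF e(2)] A[OF e(3)] A[OF e(4)]
        B[OF in_W(1,3)] B[OF in_W(2,4)] C[OF in_W(1,3) dist(1)] C[OF in_W(2,4) dist(2)]] .
qed

lemma prop5:
  fixes e01 e02 e03 e04 e12 e13 e14 e23 e24 e34 :: bool
  assumes "\<not>(e01 \<and> e12 \<and> e02)"
    and "\<not>(e01 \<and> e13 \<and> e03)"
    and "\<not>(e01 \<and> e14 \<and> e04)"
    and "\<not>(e02 \<and> e23 \<and> e03)"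
    and "\<not>(e02 \<and> e24 \<and> e04)"
    and "\<not>(e03 \<and> e34 \<and> e04)"
    and "\<not>(e12 \<and> e23 \<and> e13)"
    and "\<not>(e12 \<and> e24 \<and> e14)"
    and "\<not>(e13 \<and> e34 \<and> e14)"
    and "\<not>(e23 \<and> e34 \<and> e24)"
    and "\<not>(e01 \<and> e12 \<and> e23 \<and> e03)"
    and "\<not>(e01 \<and> e12 \<and> e24 \<and> e04)"
    and "\<not>(e01 \<and> e13 \<and> e23 \<and> e02)"
    and "\<not>(e01 \<and> e13 \<and> e34 \<and> e04)"
    and "\<not>(e01 \<and> e14 \<and> e24 \<and> e02)"
    and "\<not>(e01 \<and> e14 \<and> e34 \<and> e03)"
    and "\<not>(e02 \<and> e12 \<and> e13 \<and> e03)"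
    and "\<not>(e02 \<and> e12 \<and> e14 \<and> e04)"
    and "\<not>(e02 \<and> e23 \<and> e34 \<and> e04)"
    and "\<not>(e02 \<and> e24 \<and> e34 \<and> e03)"
    and "\<not>(e03 \<and> e13 \<and> e14 \<and> e04)"
    and "\<not>(e03 \<and> e23 \<and> e24 \<and> e04)"
    and "\<not>(e12 \<and> e23 \<and> e34 \<and> e14)"
    and "\<not>(e12 \<and> e24 \<and> e34 \<and> e13)"
    and "\<not>(e13 \<and> e23 \<and> e24 \<and> e14)"
    and "\<not>(e01 \<and> e12 \<and> e23 \<and> e34 \<and> e04)"
    and "\<not>(e01 \<and> e12 \<and> e24 \<and> e34 \<and> e03)"
    and "\<not>(e01 \<and> e13 \<and> e23 \<and> e24 \<and> e04)"
    and "\<not>(e01 \<and> e13 \<and> e34 \<and> e24 \<and> e02)"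
    and "\<not>(e01 \<and> e14 \<and> e24 \<and> e23 \<and> e03)"
    and "\<not>(e01 \<and> e14 \<and> e34 \<and> e23 \<and> e02)"
    and "\<not>(e02 \<and> e12 \<and> e13 \<and> e34 \<and> e04)"
    and "\<not>(e02 \<and> e12 \<and> e14 \<and> e34 \<and> e03)"
    and "\<not>(e02 \<and> e23 \<and> e13 \<and> e14 \<and> e04)"
    and "\<not>(e02 \<and> e24 \<and> e14 \<and> e13 \<and> e03)"
    and "\<not>(e03 \<and> e13 \<and> e12 \<and> e24 \<and> e04)"
    and "\<not>(e03 \<and> e23 \<and> e12 \<and> e14 \<and> e04)"
  shows "(\<not>e01 \<and> \<not>e12 \<and> \<not>e23 \<and> \<not>e03) \<or> (\<not>e01 \<and> \<not>e12 \<and> \<not>e24 \<and> \<not>e04) \<or> (\<not>e01 \<and> \<not>e13 \<and> \<not>e23 \<and> \<not>e02) \<or> (\<not>e01 \<and> \<not>e13 \<and> \<not>e34 \<and> \<not>e04) \<or> (\<not>e01 \<and> \<not>e14 \<and> \<not>e24 \<and> \<not>e02) \<or> (\<not>e01 \<and> \<not>e14 \<and> \<not>e34 \<and> \<not>e03) \<or> (\<not>e02 \<and> \<not>e12 \<and> \<not>e13 \<and> \<not>e03) \<or> (\<not>e02 \<and> \<not>e12 \<and> \<not>e14 \<and> \<not>e04) \<or> (\<not>e02 \<and> \<not>e23 \<and> \<not>e34 \<and> \<not>e04) \<or> (\<not>e02 \<and> \<not>e24 \<and> \<not>e34 \<and> \<not>e03) \<or> (\<not>e03 \<and> \<not>e13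 \<and> \<not>e14 \<and> \<not>e04) \<or> (\<not>e03 \<and> \<not>e23 \<and> \<not>e24 \<and> \<not>e04) \<or> (\<not>e12 \<and> \<not>e23 \<and> \<not>e34 \<and> \<not>e14) \<or> (\<not>e12 \<and> \<not>e24 \<and> \<not>e34 \<and> \<not>e13) \<or> (\<not>e13 \<and> \<not>e23 \<and> \<not>e24 \<and> \<not>e14)"
  using assms by sat

definition bad :: "nat \<Rightarrow> nat set set \<Rightarrow> bool" where
  "bad n E \<longleftrightarrow>
    (\<exists>a b c. a < n \<and> b < n \<and> c < n \<and> distinct [a,b,c] \<and> {a,b} \<notin> E \<and> {b,c} \<notin> E \<and> {c,a} \<notin> E) \<or>
    (\<exists>a b c d. a < n \<and> b < n \<and> c < n \<and> d < n \<and> distinct [a,b,c,d] \<and> {a,b} \<notin> E \<and> {b,c} \<notin> E \<and> {c,d} \<notin> E \<and> {d,a} \<notin> E) \<or>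
    (\<exists>a b c d e. a < n \<and> b < n \<and> c < n \<and> d < n \<and> e < n \<and> distinct [a,b,c,d,e] \<and> {a,b} \<notin> E \<and> {b,c} \<notin> E \<and> {c,d} \<notin> E \<and> {d,e} \<notin> E \<and> {e,a} \<notin> E)"

lemma comb5:
  assumes nb: "\<not> bad n E" and ds: "distinct [x0,x1,x2,x3,x4]" and bnd: "x0 < n" "x1 < n" "x2 < n" "x3 < n" "x4 < n"
  shows "\<exists>a b c d. a \<in> {x0,x1,x2,x3,x4} \<and> b \<in> {x0,x1,x2,x3,x4} \<and> c \<in> {x0,x1,x2,x3,x4} \<and> d \<in> {x0,x1,x2,x3,x4} \<and>
     a \<noteq> c \<and> b \<noteq> d \<and> {a,b} \<in> E \<and> {b,c} \<in> E \<and> {c,d} \<in> E \<and> {d,a} \<in> E"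
proof -
  have T3: "\<And>a b c. a < n \<Longrightarrow> b < n \<Longrightarrow> c < n \<Longrightarrow> distinct [a,b,c] \<Longrightarrow> \<not>({a,b} \<notin> E \<and> {b,c} \<notin> E \<and> {c,a} \<notin> E)"
    using nb unfolding bad_def by blast
  have T4: "\<And>a b c d. a < n \<Longrightarrow> b < n \<Longrightarrow> c < n \<Longrightarrow> d < n \<Longrightarrow> distinct [a,b,c,d] \<Longrightarrow> \<not>({a,b} \<notin> E \<and> {b,c} \<notin> E \<and> {c,d} \<notin> E \<and> {d,a} \<notin> E)"
    using nb unfolding bad_def by blast
  have T5: "\<And>a b c d e. a < n \<Longrightarrow> b < n \<Longrightarrow> c < n \<Longrightarrow> d < n \<Longrightarrow> e < n \<Longrightarrow> distinct [a,b,c,d,e] \<Longrightarrow> \<not>({a,b} \<notin> E \<and> {b,c} \<notin> E \<and> {c,d} \<notin> E \<and> {d,e} \<notin> E \<and> {e,a} \<notin> E)"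
    using nb unfolding bad_def by blast
  have h1: "\<not>({x0,x1} \<notin> E \<and> {x1,x2} \<notin> E \<and> {x0,x2} \<notin> E)"
    using T3[of x0 x1 x2] ds bnd by (auto simp: insert_commute)
  have h2: "\<not>({x0,x1} \<notin> E \<and> {x1,x3} \<notin> E \<and> {x0,x3} \<notin> E)"
    using T3[of x0 x1 x3] ds bnd by (auto simp: insert_commute)
  have h3: "\<not>({x0,x1} \<notin> E \<and> {x1,x4} \<notin> E \<and> {x0,x4} \<notin> E)"
    using T3[of x0 x1 x4] ds bnd by (auto simp: insert_commute)
  have h4: "\<not>({x0,x2} \<notin> E \<and> {x2,x3} \<notin> E \<and> {x0,x3} \<notin> E)"
    using T3[of x0 x2 x3] ds bnd by (auto simp: insert_commute)
  have h5: "\<not>({x0,x2} \<notin> E \<and> {x2,x4} \<notin> E \<and> {x0,x4} \<notin> E)"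
    using T3[of x0 x2 x4] ds bnd by (auto simp: insert_commute)
  have h6: "\<not>({x0,x3} \<notin> E \<and> {x3,x4} \<notin> E \<and> {x0,x4} \<notin> E)"
    using T3[of x0 x3 x4] ds bnd by (auto simp: insert_commute)
  have h7: "\<not>({x1,x2} \<notin> E \<and> {x2,x3} \<notin> E \<and> {x1,x3} \<notin> E)"
    using T3[of x1 x2 x3] ds bnd by (auto simp: insert_commute)
  have h8: "\<not>({x1,x2} \<notin> E \<and> {x2,x4} \<notin> E \<and> {x1,x4} \<notin> E)"
    using T3[of x1 x2 x4] ds bnd by (auto simp: insert_commute)
  have h9: "\<not>({x1,x3} \<notin> E \<and> {x3,x4} \<notin> E \<and> {x1,x4} \<notin> E)"
    using T3[of x1 x3 x4] ds bnd by (auto simp: insert_commute)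
  have h10: "\<not>({x2,x3} \<notin> E \<and> {x3,x4} \<notin> E \<and> {x2,x4} \<notin> E)"
    using T3[of x2 x3 x4] ds bnd by (auto simp: insert_commute)
  have h11: "\<not>({x0,x1} \<notin> E \<and> {x1,x2} \<notin> E \<and> {x2,x3} \<notin> E \<and> {x0,x3} \<notin> E)"
    using T4[of x0 x1 x2 x3] ds bnd by (auto simp: insert_commute)
  have h12: "\<not>({x0,x1} \<notin> E \<and> {x1,x2} \<notin> E \<and> {x2,x4} \<notin> E \<and> {x0,x4} \<notin> E)"
    using T4[of x0 x1 x2 x4] ds bnd by (auto simp: insert_commute)
  have h13: "\<not>({x0,x1} \<notin> E \<and> {x1,x3} \<notin> E \<and> {x2,x3} \<notin> E \<and> {x0,x2} \<notin> E)"
    using T4[of x0 x1 x3 x2] ds bnd by (auto simp: insert_commute)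
  have h14: "\<not>({x0,x1} \<notin> E \<and> {x1,x3} \<notin> E \<and> {x3,x4} \<notin> E \<and> {x0,x4} \<notin> E)"
    using T4[of x0 x1 x3 x4] ds bnd by (auto simp: insert_commute)
  have h15: "\<not>({x0,x1} \<notin> E \<and> {x1,x4} \<notin> E \<and> {x2,x4} \<notin> E \<and> {x0,x2} \<notin> E)"
    using T4[of x0 x1 x4 x2] ds bnd by (auto simp: insert_commute)
  have h16: "\<not>({x0,x1} \<notin> E \<and> {x1,x4} \<notin> E \<and> {x3,x4} \<notin> E \<and> {x0,x3} \<notin> E)"
    using T4[of x0 x1 x4 x3] ds bnd by (auto simp: insert_commute)
  have h17: "\<not>({x0,x2} \<notin> E \<and> {x1,x2} \<notin> E \<and> {x1,x3} \<notin> E \<and> {x0,x3} \<notin> E)"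
    using T4[of x0 x2 x1 x3] ds bnd by (auto simp: insert_commute)
  have h18: "\<not>({x0,x2} \<notin> E \<and> {x1,x2} \<notin> E \<and> {x1,x4} \<notin> E \<and> {x0,x4} \<notin> E)"
    using T4[of x0 x2 x1 x4] ds bnd by (auto simp: insert_commute)
  have h19: "\<not>({x0,x2} \<notin> E \<and> {x2,x3} \<notin> E \<and> {x3,x4} \<notin> E \<and> {x0,x4} \<notin> E)"
    using T4[of x0 x2 x3 x4] ds bnd by (auto simp: insert_commute)
  have h20: "\<not>({x0,x2} \<notin> E \<and> {x2,x4} \<notin> E \<and> {x3,x4} \<notin> E \<and> {x0,x3} \<notin> E)"
    using T4[of x0 x2 x4 x3] ds bnd by (auto simp: insert_commute)
  have h21: "\<not>({x0,x3} \<notin> E \<and> {x1,x3} \<notin> E \<and> {x1,x4} \<notin> E \<and> {x0,x4} \<notin> E)"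
    using T4[of x0 x3 x1 x4] ds bnd by (auto simp: insert_commute)
  have h22: "\<not>({x0,x3} \<notin> E \<and> {x2,x3} \<notin> E \<and> {x2,x4} \<notin> E \<and> {x0,x4} \<notin> E)"
    using T4[of x0 x3 x2 x4] ds bnd by (auto simp: insert_commute)
  have h23: "\<not>({x1,x2} \<notin> E \<and> {x2,x3} \<notin> E \<and> {x3,x4} \<notin> E \<and> {x1,x4} \<notin> E)"
    using T4[of x1 x2 x3 x4] ds bnd by (auto simp: insert_commute)
  have h24: "\<not>({x1,x2} \<notin> E \<and> {x2,x4} \<notin> E \<and> {x3,x4} \<notin> E \<and> {x1,x3} \<notin> E)"
    using T4[of x1 x2 x4 x3] ds bnd by (auto simp: insert_commute)
  have h25: "\<not>({x1,x3} \<notin> E \<and> {x2,x3} \<notin> E \<and> {x2,x4} \<notin> E \<and> {x1,x4} \<notin> E)"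
    using T4[of x1 x3 x2 x4] ds bnd by (auto simp: insert_commute)
  have h26: "\<not>({x0,x1} \<notin> E \<and> {x1,x2} \<notin> E \<and> {x2,x3} \<notin> E \<and> {x3,x4} \<notin> E \<and> {x0,x4} \<notin> E)"
    using T5[of x0 x1 x2 x3 x4] ds bnd by (auto simp: insert_commute)
  have h27: "\<not>({x0,x1} \<notin> E \<and> {x1,x2} \<notin> E \<and> {x2,x4} \<notin> E \<and> {x3,x4} \<notin> E \<and> {x0,x3} \<notin> E)"
    using T5[of x0 x1 x2 x4 x3] ds bnd by (auto simp: insert_commute)
  have h28: "\<not>({x0,x1} \<notin> E \<and> {x1,x3} \<notin> E \<and> {x2,x3} \<notin> E \<and> {x2,x4} \<notin> E \<and> {x0,x4} \<notin> E)"
    using T5[of x0 x1 x3 x2 x4] ds bnd by (auto simp: insert_commute)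
  have h29: "\<not>({x0,x1} \<notin> E \<and> {x1,x3} \<notin> E \<and> {x3,x4} \<notin> E \<and> {x2,x4} \<notin> E \<and> {x0,x2} \<notin> E)"
    using T5[of x0 x1 x3 x4 x2] ds bnd by (auto simp: insert_commute)
  have h30: "\<not>({x0,x1} \<notin> E \<and> {x1,x4} \<notin> E \<and> {x2,x4} \<notin> E \<and> {x2,x3} \<notin> E \<and> {x0,x3} \<notin> E)"
    using T5[of x0 x1 x4 x2 x3] ds bnd by (auto simp: insert_commute)
  have h31: "\<not>({x0,x1} \<notin> E \<and> {x1,x4} \<notin> E \<and> {x3,x4} \<notin> E \<and> {x2,x3} \<notin> E \<and> {x0,x2} \<notin> E)"
    using T5[of x0 x1 x4 x3 x2] ds bnd by (auto simp: insert_commute)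
  have h32: "\<not>({x0,x2} \<notin> E \<and> {x1,x2} \<notin> E \<and> {x1,x3} \<notin> E \<and> {x3,x4} \<notin> E \<and> {x0,x4} \<notin> E)"
    using T5[of x0 x2 x1 x3 x4] ds bnd by (auto simp: insert_commute)
  have h33: "\<not>({x0,x2} \<notin> E \<and> {x1,x2} \<notin> E \<and> {x1,x4} \<notin> E \<and> {x3,x4} \<notin> E \<and> {x0,x3} \<notin> E)"
    using T5[of x0 x2 x1 x4 x3] ds bnd by (auto simp: insert_commute)
  have h34: "\<not>({x0,x2} \<notin> E \<and> {x2,x3} \<notin> E \<and> {x1,x3} \<notin> E \<and> {x1,x4} \<notin> E \<and> {x0,x4} \<notin> E)"
    using T5[of x0 x2 x3 x1 x4] ds bnd by (auto simp: insert_commute)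
  have h35: "\<not>({x0,x2} \<notin> E \<and> {x2,x4} \<notin> E \<and> {x1,x4} \<notin> E \<and> {x1,x3} \<notin> E \<and> {x0,x3} \<notin> E)"
    using T5[of x0 x2 x4 x1 x3] ds bnd by (auto simp: insert_commute)
  have h36: "\<not>({x0,x3} \<notin> E \<and> {x1,x3} \<notin> E \<and> {x1,x2} \<notin> E \<and> {x2,x4} \<notin> E \<and> {x0,x4} \<notin> E)"
    using T5[of x0 x3 x1 x2 x4] ds bnd by (auto simp: insert_commute)
  have h37: "\<not>({x0,x3} \<notin> E \<and> {x2,x3} \<notin> E \<and> {x1,x2} \<notin> E \<and> {x1,x4} \<notin> E \<and> {x0,x4} \<notin> E)"
    using T5[of x0 x3 x2 x1 x4] ds bnd by (auto simp: insert_commute)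
  have "(\<not>({x0,x1} \<notin> E) \<and> \<not>({x1,x2} \<notin> E) \<and> \<not>({x2,x3} \<notin> E) \<and> \<not>({x0,x3} \<notin> E)) \<or> (\<not>({x0,x1} \<notin> E) \<and> \<not>({x1,x2} \<notin> E) \<and> \<not>({x2,x4} \<notin> E) \<and> \<not>({x0,x4} \<notin> E)) \<or> (\<not>({x0,x1} \<notin> E) \<and> \<not>({x1,x3} \<notin> E) \<and> \<not>({x2,x3} \<notin> E) \<and> \<not>({x0,x2} \<notin> E)) \<or> (\<not>({x0,x1} \<notin> E) \<and> \<not>({x1,x3} \<notin> E) \<and> \<not>({x3,x4} \<notin> E) \<and> \<not>({x0,x4} \<notin> E)) \<or> (\<not>({x0,x1} \<notin> E) \<and> \<not>({x1,x4} \<notin> E) \<and> \<not>({x2,x4} \<notin> E) \<and> \<not>({x0,x2} \<notin> E)) \<or> (\<not>({x0,x1} \<notin> E) \<and> \<not>({x1,x4} \<notin> E) \<and> \<not>({x3,x4} \<notin> E) \<and> \<not>({x0,x3} \<notin> E)) \<or> (\<not>({x0,x2} \<notin> E) \<and> \<not>({x1,x2} \<notin> E) \<and> \<not>({x1,x3} \<notin> E) \<and> \<not>({x0,x3} \<notin> E)) \<or> (\<not>({x0,x2} \<notin> E) \<and> \<not>({x1,x2} \<notin> E) \<and> \<not>({x1,x4} \<notin> E) \<and> \<not>({x0,x4} \<notin> E)) \<or> (\<not>({x0,x2} \<notin> E) \<and> \<not>({x2,x3} \<notin> E) \<and> \<not>({x3,x4} \<notin> E) \<and> \<not>({x0,x4}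 \<notin> E)) \<or> (\<not>({x0,x2} \<notin> E) \<and> \<not>({x2,x4} \<notin> E) \<and> \<not>({x3,x4} \<notin> E) \<and> \<not>({x0,x3} \<notin> E)) \<or> (\<not>({x0,x3} \<notin> E) \<and> \<not>({x1,x3} \<notin> E) \<and> \<not>({x1,x4} \<notin> E) \<and> \<not>({x0,x4} \<notin> E)) \<or> (\<not>({x0,x3} \<notin> E) \<and> \<not>({x2,x3} \<notin> E) \<and> \<not>({x2,x4} \<notin> E) \<and> \<not>({x0,x4} \<notin> E)) \<or> (\<not>({x1,x2} \<notin> E) \<and> \<not>({x2,x3} \<notin> E) \<and> \<not>({x3,x4} \<notin> E) \<and> \<not>({x1,x4} \<notin> E)) \<or> (\<not>({x1,x2} \<notin> E) \<and> \<not>({x2,x4} \<notin> E) \<and> \<not>({x3,x4} \<notin> E) \<and> \<not>({x1,x3} \<notin> E)) \<or> (\<not>({x1,x3} \<notin> E) \<and> \<not>({x2,x3} \<notin> E) \<and> \<not>({x2,x4} \<notin> E) \<and> \<not>({x1,x4} \<notin> E))"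
    by (rule prop5[OF h1 h2 h3 h4 h5 h6 h7 h8 h9 h10 h11 h12 h13 h14 h15 h16 h17 h18 h19 h20 h21 h22 h23 h24 h25 h26 h27 h28 h29 h30 h31 h32 h33 h34 h35 h36 h37])
  then show ?thesis
  proof (elim disjE)
    assume a: "\<not>({x0,x1} \<notin> E) \<and> \<not>({x1,x2} \<notin> E) \<and> \<not>({x2,x3} \<notin> E) \<and> \<not>({x0,x3} \<notin> E)"
    show ?thesis apply (rule exI[of _ x0], rule exI[of _ x1], rule exI[of _ x2], rule exI[of _ x3]) using a ds by (auto simp: insert_commute)
  next
    assume a: "\<not>({x0,x1} \<notin> E) \<and> \<not>({x1,x2} \<notin> E) \<and> \<not>({x2,x4} \<notin> E) \<and> \<not>({x0,x4} \<notin> E)"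
    show ?thesis apply (rule exI[of _ x0], rule exI[of _ x1], rule exI[of _ x2], rule exI[of _ x4]) using a ds by (auto simp: insert_commute)
  next
    assume a: "\<not>({x0,x1} \<notin> E) \<and> \<not>({x1,x3} \<notin> E) \<and> \<not>({x2,x3} \<notin> E) \<and> \<not>({x0,x2} \<notin> E)"
    show ?thesis apply (rule exI[of _ x0], rule exI[of _ x1], rule exI[of _ x3], rule exI[of _ x2]) using a ds by (auto simp: insert_commute)
  next
    assume a: "\<not>({x0,x1} \<notin> E) \<and> \<not>({x1,x3} \<notin> E) \<and> \<not>({x3,x4} \<notin> E) \<and> \<not>({x0,x4} \<notin> E)"
    show ?thesis apply (rule exI[of _ x0], rule exI[of _ x1], rule exI[of _ x3], rule exI[of _ x4]) using a ds by (auto simp: insert_commute)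
  next
    assume a: "\<not>({x0,x1} \<notin> E) \<and> \<not>({x1,x4} \<notin> E) \<and> \<not>({x2,x4} \<notin> E) \<and> \<not>({x0,x2} \<notin> E)"
    show ?thesis apply (rule exI[of _ x0], rule exI[of _ x1], rule exI[of _ x4], rule exI[of _ x2]) using a ds by (auto simp: insert_commute)
  next
    assume a: "\<not>({x0,x1} \<notin> E) \<and> \<not>({x1,x4} \<notin> E) \<and> \<not>({x3,x4} \<notin> E) \<and> \<not>({x0,x3} \<notin> E)"
    show ?thesis apply (rule exI[of _ x0], rule exI[of _ x1], rule exI[of _ x4], rule exI[of _ x3]) using a ds by (auto simp: insert_commute)
  next
    assume a: "\<not>({x0,x2} \<notin> E) \<and> \<not>({x1,x2} \<notin> E) \<and> \<not>({x1,x3} \<notin> E) \<and> \<not>({x0,x3} \<notin> E)"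
    show ?thesis apply (rule exI[of _ x0], rule exI[of _ x2], rule exI[of _ x1], rule exI[of _ x3]) using a ds by (auto simp: insert_commute)
  next
    assume a: "\<not>({x0,x2} \<notin> E) \<and> \<not>({x1,x2} \<notin> E) \<and> \<not>({x1,x4} \<notin> E) \<and> \<not>({x0,x4} \<notin> E)"
    show ?thesis apply (rule exI[of _ x0], rule exI[of _ x2], rule exI[of _ x1], rule exI[of _ x4]) using a ds by (auto simp: insert_commute)
  next
    assume a: "\<not>({x0,x2} \<notin> E) \<and> \<not>({x2,x3} \<notin> E) \<and> \<not>({x3,x4} \<notin> E) \<and> \<not>({x0,x4} \<notin> E)"
    show ?thesis apply (rule exI[of _ x0], rule exI[of _ x2], rule exI[of _ x3], rule exI[of _ x4]) using a ds by (auto simp: insert_commute)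
  next
    assume a: "\<not>({x0,x2} \<notin> E) \<and> \<not>({x2,x4} \<notin> E) \<and> \<not>({x3,x4} \<notin> E) \<and> \<not>({x0,x3} \<notin> E)"
    show ?thesis apply (rule exI[of _ x0], rule exI[of _ x2], rule exI[of _ x4], rule exI[of _ x3]) using a ds by (auto simp: insert_commute)
  next
    assume a: "\<not>({x0,x3} \<notin> E) \<and> \<not>({x1,x3} \<notin> E) \<and> \<not>({x1,x4} \<notin> E) \<and> \<not>({x0,x4} \<notin> E)"
    show ?thesis apply (rule exI[of _ x0], rule exI[of _ x3], rule exI[of _ x1], rule exI[of _ x4]) using a ds by (auto simp: insert_commute)
  next
    assume a: "\<not>({x0,x3} \<notin> E) \<and> \<not>({x2,x3} \<notin> E) \<and> \<not>({x2,x4} \<notin> E) \<and> \<not>({x0,x4} \<notin> E)"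
    show ?thesis apply (rule exI[of _ x0], rule exI[of _ x3], rule exI[of _ x2], rule exI[of _ x4]) using a ds by (auto simp: insert_commute)
  next
    assume a: "\<not>({x1,x2} \<notin> E) \<and> \<not>({x2,x3} \<notin> E) \<and> \<not>({x3,x4} \<notin> E) \<and> \<not>({x1,x4} \<notin> E)"
    show ?thesis apply (rule exI[of _ x1], rule exI[of _ x2], rule exI[of _ x3], rule exI[of _ x4]) using a ds by (auto simp: insert_commute)
  next
    assume a: "\<not>({x1,x2} \<notin> E) \<and> \<not>({x2,x4} \<notin> E) \<and> \<not>({x3,x4} \<notin> E) \<and> \<not>({x1,x3} \<notin> E)"
    show ?thesis apply (rule exI[of _ x1], rule exI[of _ x2], rule exI[of _ x4], rule exI[of _ x3]) using a ds by (auto simp: insert_commute)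
  next
    assume a: "\<not>({x1,x3} \<notin> E) \<and> \<not>({x2,x3} \<notin> E) \<and> \<not>({x2,x4} \<notin> E) \<and> \<not>({x1,x4} \<notin> E)"
    show ?thesis apply (rule exI[of _ x1], rule exI[of _ x3], rule exI[of _ x2], rule exI[of _ x4]) using a ds by (auto simp: insert_commute)
  qed
qed

definition pt :: "real \<Rightarrow> real \<Rightarrow> nat \<Rightarrow> real" where "pt x y = (\<lambda>i. if i = 0 then x else y)"

lemma edist_pt: "edist 2 (pt x1 y1) (pt x2 y2) = sqrt ((x1-x2)^2 + (y1-y2)^2)"
  unfolding edist2 pt_def by simp

lemma edist_sym: "edist 2 x y = edist 2 y x"
  unfolding edist2 by (simp add: power2_commute)

definition hh :: real where "hh = sqrt 3 / 2"
definition rr :: real where "rr = sqrt (2 - sqrt 3)"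

lemma hh_sq: "hh^2 = 3/4" unfolding hh_def by (simp add: power_divide)

lemma sqrt3_bounds: "1 < sqrt (3::real)" "sqrt (3::real) < 2"
proof -
  show "1 < sqrt (3::real)" by (simp add: real_less_rsqrt)
  have "sqrt (3::real) < sqrt 4" by (subst real_sqrt_less_iff) simp
  also have "sqrt (4::real) = 2" by (simp add: real_sqrt_unique)
  finally show "sqrt (3::real) < 2" .
qed

lemma rr_bounds: "0 < rr" "rr < 1"
proof -
  show "0 < rr" unfolding rr_def using sqrt3_bounds(2) by simp
  have "sqrt (2 - sqrt 3) < sqrt 1" using sqrt3_bounds(1) by (subst real_sqrt_less_iff) linarith
  then show "rr < 1" unfolding rr_def by simp
qed

definition "P0 = pt 0 0"
definition "PA = pt (1/2) hh"
definition "PC = pt (-1/2) hh"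
definition "PV = pt 0 1"

lemma d_0a: "edist 2 P0 PA = 1"
  unfolding P0_def PA_def edist_pt hh_def by (simp add: power_divide)
lemma d_0c: "edist 2 P0 PC = 1"
  unfolding P0_def PC_def edist_pt hh_def by (simp add: power_divide)
lemma d_0v: "edist 2 P0 PV = 1"
  unfolding P0_def PV_def edist_pt by simp
lemma d_ac: "edist 2 PA PC = 1"
  unfolding PA_def PC_def edist_pt by simp
lemma d_av: "edist 2 PA PV = rr"
proof -
  have h2: "2*hh = sqrt 3" unfolding hh_def by simp
  have "(1/2 - 0)^2 + (hh - 1)^2 = 1/4 + hh^2 - 2*hh + 1"
    by (simp add: power2_diff power2_eq_square algebra_simps)
  also have "\<dots> = 2 - sqrt (3::real)" using hh_sq h2 by simp
  finally show ?thesis unfolding PA_def PC_def PV_def edist_pt rr_def by simp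
qed
lemma d_cv: "edist 2 PC PV = rr"
proof -
  have h2: "2*hh = sqrt 3" unfolding hh_def by simp
  have "(-1/2 - 0)^2 + (hh - 1)^2 = 1/4 + hh^2 - 2*hh + 1"
    by (simp add: power2_diff power2_eq_square algebra_simps)
  also have "\<dots> = 2 - sqrt (3::real)" using hh_sq h2 by simp
  finally show ?thesis unfolding PA_def PC_def PV_def edist_pt rr_def by simp
qed
lemma d_self: "edist 2 x x = 0" unfolding edist2 by simp

lemmas dists = d_0a d_0c d_0v d_ac d_av d_cv d_0a[THEN edist_sym[THEN trans]] d_0c[THEN edist_sym[THEN trans]]
  d_0v[THEN edist_sym[THEN trans]] d_ac[THEN edist_sym[THEN trans]] d_av[THEN edist_sym[THEN trans]]
  d_cv[THEN edist_sym[THEN trans]] d_self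

lemma lb_det:
  assumes EU: "E \<subseteq> all_edges n"
    and ds: "distinct [a,v,c,d]"
    and ne: "{v,a} \<notin> E" "{v,c} \<notin> E"
    and ed: "{a,c} \<in> E" "{d,a} \<in> E" "{d,v} \<in> E" "{d,c} \<in> E"
  shows "good_set 2 E {a,v,c,d} \<and> graph_connected {a,v,c,d} (induced_edges E {a,v,c,d})"
proof -
  define W where "W = {a,v,c,d}"
  define F where "F = {{a,c},{d,a},{d,v},{d,c}}"
  have IF: "induced_edges E W = F"
  proof
    show "induced_edges E W \<subseteq> F"
    proof
      fix e assume e: "e \<in> induced_edges E W"
      then have eE: "e \<in> E" and eW: "e \<subseteq> W" unfolding induced_edges_def by auto
      then obtain x y where xy: "e = {x,y}" "x \<noteq> y" using EU unfolding all_edges_def by blast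
      have "x \<in> W" "y \<in> W" using eW xy by auto
      then show "e \<in> F" using xy eE ne unfolding W_def F_def by (auto simp: insert_commute)
    qed
  next
    show "F \<subseteq> induced_edges E W" using ed unfolding F_def W_def induced_edges_def by auto
  qed
  define f where "f = (\<lambda>x. if x = d then P0 else if x = a then PA
     else if x = c then PC else PV)"
  have fv: "f d = P0" "f a = PA" "f c = PC" "f v = PV"
    using ds unfolding f_def by auto
  have dist_eq: "edist 2 (f x) (f y) = (if x = y then 0 else if {x,y} \<in> F then 1 else rr)"
    if "x \<in> W" "y \<in> W" for x y
  proof -
    have dd: "a \<noteq> v" "a \<noteq> c" "a \<noteq> d" "v \<noteq> c" "v \<noteq> d" "c \<noteq> d"
      "v \<noteq> a" "c \<noteq> a" "d \<noteq> a" "c \<noteq> v" "d \<noteq> v" "d \<noteq> c" using ds by auto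
    have "x = a \<or> x = v \<or> x = c \<or> x = d" "y = a \<or> y = v \<or> y = c \<or> y = d"
      using that unfolding W_def by auto
    then show ?thesis unfolding F_def
      by (elim disjE) (simp_all add: fv dists dd doubleton_eq_iff)
  qed
  have fin: "finite W" unfolding W_def by simp
  have Mx: "Max ((\<lambda>(x, y). edist 2 (f x) (f y)) ` (W \<times> W)) = 1"
  proof (rule Max_eqI)
    show "finite ((\<lambda>(x, y). edist 2 (f x) (f y)) ` (W \<times> W))" using fin by simp
  next
    fix y assume "y \<in> (\<lambda>(x, y). edist 2 (f x) (f y)) ` (W \<times> W)"
    then show "y \<le> 1" using dist_eq rr_bounds by auto
  next
    have "edist 2 (f a) (f c) = 1" using dist_eq[of a c] ds unfolding W_def F_def by simp
    moreover have "(a,c) \<in> W \<times> W" unfolding W_def by simp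
    ultimately show "1 \<in> (\<lambda>(x, y). edist 2 (f x) (f y)) ` (W \<times> W)" by force
  qed
  have diam: "is_diameter_graph 2 W F"
    unfolding is_diameter_graph_def
  proof (intro conjI exI[of _ f])
    show "finite W" by (rule fin)
    show "W \<noteq> {}" unfolding W_def by simp
    show "\<forall>u\<in>W. \<forall>w\<in>W. u \<noteq> w \<longrightarrow> edist 2 (f u) (f w) \<noteq> 0"
      using dist_eq rr_bounds by auto
    show "F = {{u, w} |u w. u \<in> W \<and> w \<in> W \<and> u \<noteq> w \<and> edist 2 (f u) (f w) = Max ((\<lambda>(a, b). edist 2 (f a) (f b)) ` (W \<times> W))}"
      unfolding Mx
    proof
      show "F \<subseteq> {{u, w} |u w. u \<in> W \<and> w \<in> W \<and> u \<noteq> w \<and> edist 2 (f u) (f w) = 1}"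
      proof
        fix e assume e: "e \<in> F"
        then obtain x y where xy: "e = {x,y}" "x \<in> W" "y \<in> W" "x \<noteq> y" "{x,y} \<in> F"
          using ds unfolding F_def W_def by auto
        then have "edist 2 (f x) (f y) = 1" using dist_eq[OF xy(2,3)] by simp
        then show "e \<in> {{u, w} |u w. u \<in> W \<and> w \<in> W \<and> u \<noteq> w \<and> edist 2 (f u) (f w) = 1}"
          using xy by blast
      qed
    next
      show "{{u, w} |u w. u \<in> W \<and> w \<in> W \<and> u \<noteq> w \<and> edist 2 (f u) (f w) = 1} \<subseteq> F"
        using dist_eq rr_bounds by (auto split: if_splits)
    qed
  qed
  have chi: "chromatic_number W F = 3"
    unfolding chromatic_number_def
  proof (rule Least_equality)
    define col where "col = (\<lambda>x. if x = a then 0 else if x = c then 1 else if x = d then 2 else (0::nat))"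
    show "\<exists>col::nat\<Rightarrow>nat. (\<forall>x\<in>W. col x < (3::nat)) \<and> (\<forall>u\<in>W. \<forall>w\<in>W. u \<noteq> w \<and> {u, w} \<in> F \<longrightarrow> col u \<noteq> col w)"
      using ds by (intro exI[of _ col]) (auto simp: col_def W_def F_def doubleton_eq_iff)
  next
    fix k :: nat assume "\<exists>col::nat\<Rightarrow>nat. (\<forall>x\<in>W. col x < k) \<and> (\<forall>u\<in>W. \<forall>w\<in>W. u \<noteq> w \<and> {u, w} \<in> F \<longrightarrow> col u \<noteq> col w)"
    then obtain col where c1: "\<forall>x\<in>W. col x < k" and c2: "\<forall>u\<in>W. \<forall>w\<in>W. u \<noteq> w \<and> {u, w} \<in> F \<longrightarrow> col u \<noteq> col w"
      by blast
    have "col a \<noteq> col c" "col d \<noteq> col a" "col d \<noteq> col c"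
      using c2 ds unfolding W_def F_def by auto
    moreover have "col a < k" "col c < k" "col d < k" using c1 unfolding W_def by auto
    ultimately show "3 \<le> k" by linarith
  qed
  have conn: "graph_connected W F"
    unfolding graph_connected_def
  proof (intro ballI)
    fix x y assume x: "x \<in> W" and y: "y \<in> W"
    let ?R = "\<lambda>a b. a \<in> W \<and> b \<in> W \<and> a \<noteq> b \<and> {a, b} \<in> F"
    have toD: "?R\<^sup>*\<^sup>* u d" if "u \<in> W" for u
    proof (cases "u = d")
      case True then show ?thesis by simp
    next
      case False
      then have "?R u d" using that ds unfolding W_def F_def by (auto simp: insert_commute)
      then show ?thesis by blast
    qed
    have fromD: "?R\<^sup>*\<^sup>* d u" if "u \<in> W" for u
    proof (cases "u = d")
      case True then show ?thesis by simp
    next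
      case False
      then have "?R d u" using that ds unfolding W_def F_def by (auto simp: insert_commute)
      then show ?thesis by blast
    qed
    show "?R\<^sup>*\<^sup>* x y" using toD[OF x] fromD[OF y] by (rule rtranclp_trans)
  qed
  show ?thesis unfolding good_set_def W_def[symmetric] IF using diam chi conn by simp
qed

lemma ub_det:
  assumes nb: "\<not> bad n E" and Wn: "W \<subseteq> {0..<n}" and c5: "5 \<le> card W"
  shows "\<not> good_set 2 E W"
proof
  assume "good_set 2 E W"
  then have dg: "is_diameter_graph 2 W (induced_edges E W)" unfolding good_set_def by simp
  obtain T where T: "T \<subseteq> W" "card T = 5" "finite T" using obtain_subset_with_card_n[OF c5] by blast
  obtain xs where xs: "set xs = T" "distinct xs" using finite_distinct_list[OF T(3)] by blast
  have "length xs = 5" using distinct_card[OF xs(2)] xs(1) T(2) by simp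
  then have "\<exists>x0 x1 x2 x3 x4. xs = [x0,x1,x2,x3,x4]" by (simp add: length_Suc_conv numeral_eq_Suc) blast
  then obtain x0 x1 x2 x3 x4 where xe: "xs = [x0,x1,x2,x3,x4]" by blast
  have TW: "{x0,x1,x2,x3,x4} \<subseteq> W" using T(1) xs(1) xe by simp
  have bnd: "x0 < n" "x1 < n" "x2 < n" "x3 < n" "x4 < n" using TW Wn by auto
  obtain a b c d where abcd: "a \<in> {x0,x1,x2,x3,x4}" "b \<in> {x0,x1,x2,x3,x4}" "c \<in> {x0,x1,x2,x3,x4}" "d \<in> {x0,x1,x2,x3,x4}"
     "a \<noteq> c" "b \<noteq> d" "{a,b} \<in> E" "{b,c} \<in> E" "{c,d} \<in> E" "{d,a} \<in> E"
    using comb5[OF nb xs(2)[unfolded xe] bnd] by blast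
  have inW: "a \<in> W" "b \<in> W" "c \<in> W" "d \<in> W" using abcd(1-4) TW by auto
  have "{a,b} \<in> induced_edges E W" "{b,c} \<in> induced_edges E W" "{c,d} \<in> induced_edges E W" "{d,a} \<in> induced_edges E W"
    using abcd inW unfolding induced_edges_def by auto
  then show False using no_C4_diam[OF dg inW abcd(5,6)] by blast
qed

lemma PU_indep_aux:
  assumes "finite I" "\<forall>i\<in>I. finite (S i)"
    and disj: "\<forall>i\<in>I. \<forall>j\<in>I. i \<noteq> j \<longrightarrow> S i \<inter> S j = {}"
    and loc: "\<forall>i\<in>I. \<forall>E. A i E = A i (E \<inter> S i)"
  shows "PU p (\<Union>i\<in>I. S i) (\<lambda>E. \<forall>i\<in>I. A i E) = (\<Prod>i\<in>I. PU p (S i) (A i))"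
  using assms
proof (induction I rule: finite_induct)
  case empty
  then show ?case unfolding PU_def wt_def by simp
next
  case (insert j I)
  define R where "R = (\<Union>i\<in>I. S i)"
  have fR: "finite R" unfolding R_def using insert.prems(1) insert.hyps(1) by blast
  have fj: "finite (S j)" using insert.prems(1) by blast
  have "S j \<inter> S i = {}" if "i \<in> I" for i
    using insert.prems(2) insert.hyps(2) that by (metis insertCI)
  then have dj: "S j \<inter> R = {}" unfolding R_def by blast
  have U: "(\<Union>i\<in>insert j I. S i) = S j \<union> R" unfolding R_def by simp
  have ind: "(if (\<forall>i\<in>insert j I. A i E) then 1 else (0::real))
      = (if A j (E \<inter> S j) then 1 else 0) * (if (\<forall>i\<in>I. A i (E \<inter> R)) then 1 else 0)" for E
  proof -
    have "A i E = A i (E \<inter> R)" if "i \<in> I" for i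
    proof -
      have "S i \<subseteq> R" unfolding R_def using that by auto
      then have "E \<inter> S i = (E \<inter> R) \<inter> S i" by auto
      then show ?thesis using insert.prems(3) that by (metis insertCI)
    qed
    moreover have "A j E = A j (E \<inter> S j)" using insert.prems(3) by blast
    ultimately have "(\<forall>i\<in>insert j I. A i E) = (A j (E \<inter> S j) \<and> (\<forall>i\<in>I. A i (E \<inter> R)))" by blast
    then show ?thesis by simp
  qed
  have "PU p (\<Union>i\<in>insert j I. S i) (\<lambda>E. \<forall>i\<in>insert j I. A i E)
      = (\<Sum>E\<in>Pow (S j \<union> R). wt p (S j \<union> R) E * (if A j (E \<inter> S j) then 1 else 0) * (if (\<forall>i\<in>I. A i (E \<inter> R)) then 1 else 0))"
    unfolding PU_def U by (intro sum.cong refl) (simp only: ind mult.assoc)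
  also have "\<dots> = PU p (S j) (A j) * PU p R (\<lambda>E. \<forall>i\<in>I. A i E)"
    unfolding PU_def by (rule block_sum[OF fj fR dj])
  also have "PU p R (\<lambda>E. \<forall>i\<in>I. A i E) = (\<Prod>i\<in>I. PU p (S i) (A i))"
    unfolding R_def
  proof (rule insert.IH)
    show "\<forall>i\<in>I. finite (S i)" using insert.prems(1) by blast
    show "\<forall>i\<in>I. \<forall>j\<in>I. i \<noteq> j \<longrightarrow> S i \<inter> S j = {}" using insert.prems(2) by blast
    show "\<forall>i\<in>I. \<forall>E. A i E = A i (E \<inter> S i)" using insert.prems(3) by blast
  qed
  finally show ?case using insert.hyps by simp
qed

lemma PU_indep:
  assumes "finite U" "finite I" "\<forall>i\<in>I. S i \<subseteq> U"
    and disj: "\<forall>i\<in>I. \<forall>j\<in>I. i \<noteq> j \<longrightarrow> S i \<inter> S j = {}"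
    and loc: "\<forall>i\<in>I. \<forall>E. A i E = A i (E \<inter> S i)"
  shows "PU p U (\<lambda>E. \<forall>i\<in>I. A i E) = (\<Prod>i\<in>I. PU p (S i) (A i))"
proof -
  have sub: "(\<Union>i\<in>I. S i) \<subseteq> U" using assms by auto
  have "PU p U (\<lambda>E. \<forall>i\<in>I. A i E) = PU p (\<Union>i\<in>I. S i) (\<lambda>E. \<forall>i\<in>I. A i E)"
  proof (rule PU_local[OF assms(1) sub])
    fix E
    have "A i E = A i (E \<inter> (\<Union>i\<in>I. S i))" if "i \<in> I" for i
    proof -
      have "E \<inter> S i = (E \<inter> (\<Union>i\<in>I. S i)) \<inter> S i" using that by auto
      then show ?thesis using loc that by metis
    qed
    then show "(\<forall>i\<in>I. A i E) = (\<forall>i\<in>I. A i (E \<inter> (\<Union>i\<in>I. S i)))" by auto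
  qed
  also have "\<dots> = (\<Prod>i\<in>I. PU p (S i) (A i))"
  proof (rule PU_indep_aux[OF assms(2) _ disj loc])
    show "\<forall>i\<in>I. finite (S i)" using assms(1,3) finite_subset by blast
  qed
  finally show ?thesis .
qed

lemma union_bound_sets:
  fixes p :: real
  assumes "0 \<le> p" "p \<le> 1" "finite U" "finite X" "\<forall>x\<in>X. S x \<subseteq> U \<and> card (S x) = k"
  shows "PU p U (\<lambda>E. \<exists>x\<in>X. \<forall>e\<in>S x. e \<notin> E) \<le> card X * (1-p)^k"
proof -
  have "PU p U (\<lambda>E. \<exists>x\<in>X. \<forall>e\<in>S x. e \<notin> E) \<le> (\<Sum>x\<in>X. PU p U (\<lambda>E. \<forall>e\<in>S x. e \<notin> E))"
    by (rule PU_Union[OF assms(1,2,4)])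
  also have "\<dots> = (\<Sum>x\<in>X. (1-p)^k)"
    using assms by (intro sum.cong) (auto simp: PU_none_in)
  finally show ?thesis by simp
qed

lemma fin_edges: "finite (all_edges n)"
proof -
  have "all_edges n \<subseteq> Pow {0..<n}" unfolding all_edges_def by auto
  then show ?thesis by (rule finite_subset) simp
qed

lemma edge_in: "x < n \<Longrightarrow> y < n \<Longrightarrow> x \<noteq> y \<Longrightarrow> {x,y} \<in> all_edges n"
  unfolding all_edges_def by auto

lemma prob_eq: "prob_Gnp n p A = PU p (all_edges n) A"
proof -
  have f: "finite (all_edges n)" by (rule fin_edges)
  have eqs: "{E. E \<subseteq> all_edges n \<and> A E} = {E \<in> Pow (all_edges n). A E}" by auto
  have "prob_Gnp n p A = (\<Sum>E\<in>{E \<in> Pow (all_edges n). A E}. p ^ card E * (1 - p) ^ (card (all_edges n) - card E))"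
    unfolding prob_Gnp_def eqs ..
  also have "\<dots> = (\<Sum>E\<in>Pow (all_edges n). if A E then p ^ card E * (1 - p) ^ (card (all_edges n) - card E) else 0)"
    by (rule sum.inter_filter) (simp add: f)
  also have "\<dots> = PU p (all_edges n) A"
    unfolding PU_def wt_def
  proof (intro sum.cong refl)
    fix E assume "E \<in> Pow (all_edges n)"
    then have "card (all_edges n - E) = card (all_edges n) - card E"
      using f by (intro card_Diff_subset) (auto intro: finite_subset)
    then show "(if A E then p ^ card E * (1 - p) ^ (card (all_edges n) - card E) else 0) =
         p ^ card E * (1 - p) ^ card (all_edges n - E) * (if A E then 1 else 0)" by simp
  qed
  finally show ?thesis .
qed

lemma card3: "distinct [a,b,c] \<Longrightarrow> card {{a,b},{b,c},{c,a}} = (3::nat)"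
  by (auto simp: card_insert_if doubleton_eq_iff)
lemma card4: "distinct [a,b,c,d] \<Longrightarrow> card {{a,b},{b,c},{c,d},{d,a}} = (4::nat)"
  by (auto simp: card_insert_if doubleton_eq_iff)
lemma card5: "distinct [a,b,c,d,e] \<Longrightarrow> card {{a,b},{b,c},{c,d},{d,e},{e,a}} = (5::nat)"
  by (auto simp: card_insert_if doubleton_eq_iff)

lemma PU_bad:
  fixes p :: real
  assumes p: "0 \<le> p" "p \<le> 1"
  shows "PU p (all_edges n) (bad n) \<le> real n^3*(1-p)^3 + real n^4*(1-p)^4 + real n^5*(1-p)^5"
proof -
  let ?U = "all_edges n"
  have fU: "finite ?U" by (rule fin_edges)
  define X3 where "X3 = {(a,b,c). a < n \<and> b < n \<and> c < n \<and> distinct [a,b,c]}"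
  define S3 where "S3 = (\<lambda>(a,b,c). {{a,b},{b,c},{c,(a::nat)}})"
  define X4 where "X4 = {(a,b,c,d). a < n \<and> b < n \<and> c < n \<and> d < n \<and> distinct [a,b,c,d]}"
  define S4 where "S4 = (\<lambda>(a,b,c,d). {{a,b},{b,c},{c,d},{d,(a::nat)}})"
  define X5 where "X5 = {(a,b,c,d,e). a < n \<and> b < n \<and> c < n \<and> d < n \<and> e < n \<and> distinct [a,b,c,d,e]}"
  define S5 where "S5 = (\<lambda>(a,b,c,d,e). {{a,b},{b,c},{c,d},{d,e},{e,(a::nat)}})"
  have X3s: "X3 \<subseteq> {..<n} \<times> {..<n} \<times> {..<n}" unfolding X3_def by auto
  have X4s: "X4 \<subseteq> {..<n} \<times> {..<n} \<times> {..<n} \<times> {..<n}" unfolding X4_def by auto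
  have X5s: "X5 \<subseteq> {..<n} \<times> {..<n} \<times> {..<n} \<times> {..<n} \<times> {..<n}" unfolding X5_def by auto
  have f3: "finite X3" by (rule finite_subset[OF X3s]) auto
  have f4: "finite X4" by (rule finite_subset[OF X4s]) auto
  have f5: "finite X5" by (rule finite_subset[OF X5s]) auto
  have c3: "card X3 \<le> n^3" using card_mono[OF _ X3s] by (simp add: card_cartesian_product power3_eq_cube)
  have c4: "card X4 \<le> n^4" using card_mono[OF _ X4s] by (simp add: card_cartesian_product power4_eq_xxxx)
  have c5: "card X5 \<le> n^5" using card_mono[OF _ X5s] by (simp add: card_cartesian_product numeral_eq_Suc)
  have s3: "\<forall>x\<in>X3. S3 x \<subseteq> ?U \<and> card (S3 x) = 3" unfolding X3_def S3_def
    by (auto simp: edge_in card3)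
  have s4: "\<forall>x\<in>X4. S4 x \<subseteq> ?U \<and> card (S4 x) = 4" unfolding X4_def S4_def
    by (auto simp: edge_in card4)
  have s5: "\<forall>x\<in>X5. S5 x \<subseteq> ?U \<and> card (S5 x) = 5" unfolding X5_def S5_def
    by (auto simp: edge_in card5)
  have "PU p ?U (bad n) \<le> PU p ?U (\<lambda>E. (\<exists>x\<in>X3. \<forall>e\<in>S3 x. e \<notin> E) \<or> ((\<exists>x\<in>X4. \<forall>e\<in>S4 x. e \<notin> E) \<or> (\<exists>x\<in>X5. \<forall>e\<in>S5 x. e \<notin> E)))"
  proof (rule PU_mono[OF p])
    fix E assume "bad n E"
    then show "(\<exists>x\<in>X3. \<forall>e\<in>S3 x. e \<notin> E) \<or> ((\<exists>x\<in>X4. \<forall>e\<in>S4 x. e \<notin> E) \<or> (\<exists>x\<in>X5. \<forall>e\<in>S5 x. e \<notin> E))"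
      unfolding bad_def
    proof (elim disjE exE conjE)
      fix a b c assume "a < n" "b < n" "c < n" "distinct [a,b,c]" "{a,b} \<notin> E" "{b,c} \<notin> E" "{c,a} \<notin> E"
      then have "(a,b,c) \<in> X3" "\<forall>e\<in>S3 (a,b,c). e \<notin> E" unfolding X3_def S3_def by auto
      then show ?thesis by blast
    next
      fix a b c d assume "a < n" "b < n" "c < n" "d < n" "distinct [a,b,c,d]" "{a,b} \<notin> E" "{b,c} \<notin> E" "{c,d} \<notin> E" "{d,a} \<notin> E"
      then have "(a,b,c,d) \<in> X4" "\<forall>e\<in>S4 (a,b,c,d). e \<notin> E" unfolding X4_def S4_def by auto
      then show ?thesis by blast
    next
      fix a b c d e assume "a < n" "b < n" "c < n" "d < n" "e < n" "distinct [a,b,c,d,e]" "{a,b} \<notin> E" "{b,c} \<notin> E" "{c,d} \<notin> E" "{d,e} \<notin> E" "{e,a} \<notin> E"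
      then have "(a,b,c,d,e) \<in> X5" "\<forall>e'\<in>S5 (a,b,c,d,e). e' \<notin> E" unfolding X5_def S5_def by auto
      then show ?thesis by blast
    qed
  qed
  also have "\<dots> \<le> PU p ?U (\<lambda>E. \<exists>x\<in>X3. \<forall>e\<in>S3 x. e \<notin> E) + PU p ?U (\<lambda>E. (\<exists>x\<in>X4. \<forall>e\<in>S4 x. e \<notin> E) \<or> (\<exists>x\<in>X5. \<forall>e\<in>S5 x. e \<notin> E))"
    by (rule PU_union[OF p])
  also have "\<dots> \<le> PU p ?U (\<lambda>E. \<exists>x\<in>X3. \<forall>e\<in>S3 x. e \<notin> E) + (PU p ?U (\<lambda>E. \<exists>x\<in>X4. \<forall>e\<in>S4 x. e \<notin> E) + PU p ?U (\<lambda>E. \<exists>x\<in>X5. \<forall>e\<in>S5 x. e \<notin> E))"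
    by (intro add_left_mono PU_union[OF p])
  also have "\<dots> \<le> card X3 * (1-p)^3 + (card X4 * (1-p)^4 + card X5 * (1-p)^5)"
    using union_bound_sets[OF p fU f3 s3] union_bound_sets[OF p fU f4 s4] union_bound_sets[OF p fU f5 s5]
    by linarith
  also have "\<dots> \<le> real n^3*(1-p)^3 + (real n^4*(1-p)^4 + real n^5*(1-p)^5)"
  proof -
    have q: "0 \<le> 1 - p" using p by simp
    have "real (card X3) \<le> real n^3" using c3 by (metis of_nat_le_iff of_nat_power)
    moreover have "real (card X4) \<le> real n^4" using c4 by (metis of_nat_le_iff of_nat_power)
    moreover have "real (card X5) \<le> real n^5" using c5 by (metis of_nat_le_iff of_nat_power)
    ultimately show ?thesis using q by (intro add_mono mult_right_mono) auto
  qed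
  finally show ?thesis by simp
qed

definition hideg :: "nat \<Rightarrow> nat \<Rightarrow> nat set set \<Rightarrow> bool" where
  "hideg n t E \<longleftrightarrow> (\<exists>x<n. t \<le> card {y. y < n \<and> y \<noteq> x \<and> {x,y} \<notin> E})"

lemma choose_le_pow: "m choose t \<le> m ^ t"
  by (cases "t \<le> m") (auto simp: binomial_le_pow binomial_eq_0)

lemma PU_hd:
  fixes p :: real
  assumes p: "0 \<le> p" "p \<le> 1"
  shows "PU p (all_edges n) (hideg n t) \<le> real n * real n ^ t * (1-p)^t"
proof -
  let ?U = "all_edges n"
  have fU: "finite ?U" by (rule fin_edges)
  define X where "X = Sigma {..<n} (\<lambda>x. {T. T \<subseteq> {0..<n} - {x} \<and> card T = t})"
  define S where "S = (\<lambda>(x,T). (\<lambda>y. {x,y::nat}) ` T)"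
  have fX: "finite X" unfolding X_def by (intro finite_SigmaI) auto
  have cX: "card X = (\<Sum>x<n. card {T. T \<subseteq> {0..<n} - {x} \<and> card T = t})"
    unfolding X_def by (intro card_SigmaI) auto
  also have "\<dots> = (\<Sum>x<n. (n - 1) choose t)"
    by (intro sum.cong refl) (simp add: n_subsets)
  also have "\<dots> \<le> (\<Sum>x<n. n ^ t)"
  proof (intro sum_mono)
    fix x show "(n - 1) choose t \<le> n ^ t"
      using choose_le_pow[of "n-1" t] power_mono[of "n-1" n t] by simp
  qed
  finally have cX': "card X \<le> n * n ^ t" by simp
  have sS: "\<forall>x\<in>X. S x \<subseteq> ?U \<and> card (S x) = t"
  proof
    fix z assume z: "z \<in> X"
    then obtain x T where zx: "z = (x,T)" "x < n" "T \<subseteq> {0..<n} - {x}" "card T = t" unfolding X_def by auto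
    have "inj_on (\<lambda>y. {x,y}) T"
      using zx(3) by (intro inj_onI) (auto simp: doubleton_eq_iff)
    then have "card (S z) = t" using zx unfolding S_def by (simp add: card_image)
    moreover have "S z \<subseteq> ?U" using zx unfolding S_def by (auto intro!: edge_in)
    ultimately show "S z \<subseteq> ?U \<and> card (S z) = t" by simp
  qed
  have "PU p ?U (hideg n t) \<le> PU p ?U (\<lambda>E. \<exists>z\<in>X. \<forall>e\<in>S z. e \<notin> E)"
  proof (rule PU_mono[OF p])
    fix E assume "hideg n t E"
    then obtain x where x: "x < n" "t \<le> card {y. y < n \<and> y \<noteq> x \<and> {x,y} \<notin> E}" unfolding hideg_def by blast
    obtain T where T: "T \<subseteq> {y. y < n \<and> y \<noteq> x \<and> {x,y} \<notin> E}" "card T = t" "finite T"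
      by (rule obtain_subset_with_card_n[OF x(2)])
    have "(x,T) \<in> X" using x T unfolding X_def by auto
    moreover have "\<forall>e\<in>S (x,T). e \<notin> E" using T unfolding S_def by auto
    ultimately show "\<exists>z\<in>X. \<forall>e\<in>S z. e \<notin> E" by blast
  qed
  also have "\<dots> \<le> card X * (1-p)^t" by (rule union_bound_sets[OF p fU fX sS])
  also have "\<dots> \<le> real n * real n ^ t * (1-p)^t"
  proof -
    have "real (card X) \<le> real n * real n ^ t" using cX' by (metis of_nat_le_iff of_nat_mult of_nat_power)
    then show ?thesis using p by (intro mult_right_mono) auto
  qed
  finally show ?thesis .
qed

definition cherry :: "nat \<Rightarrow> nat set set \<Rightarrow> bool" where
  "cherry m E \<longleftrightarrow> (\<exists>v<m. (\<exists>w\<in>{m..<2*m}. {v,w} \<notin> E) \<and> (\<exists>w\<in>{2*m..<3*m}. {v,w} \<notin> E))"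

lemma PU_nocherry:
  fixes p :: real
  assumes p: "0 \<le> p" "p \<le> 1" and mn: "3*m \<le> n"
  shows "PU p (all_edges n) (\<lambda>E. \<not> cherry m E) = (1 - (1 - p^m)^2)^m"
proof -
  let ?U = "all_edges n"
  have fU: "finite ?U" by (rule fin_edges)
  define S1 where "S1 = (\<lambda>v. (\<lambda>w. {v,w::nat}) ` {m..<2*m})"
  define S2 where "S2 = (\<lambda>v. (\<lambda>w. {v,w::nat}) ` {2*m..<3*m})"
  define S where "S = (\<lambda>v. S1 v \<union> S2 v)"
  define A where "A = (\<lambda>v E. S1 v \<subseteq> E \<or> S2 v \<subseteq> E)"
  have ev: "(\<not> cherry m E) = (\<forall>v\<in>{..<m}. A v E)" for E
    unfolding cherry_def A_def S1_def S2_def by auto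
  have sub: "\<forall>v\<in>{..<m}. S v \<subseteq> ?U"
    unfolding S_def S1_def S2_def using mn by (auto intro!: edge_in)
  have disj: "\<forall>i\<in>{..<m}. \<forall>j\<in>{..<m}. i \<noteq> j \<longrightarrow> S i \<inter> S j = {}"
    unfolding S_def S1_def S2_def by (auto simp: doubleton_eq_iff)
  have loc: "\<forall>i\<in>{..<m}. \<forall>E. A i E = A i (E \<inter> S i)"
    unfolding A_def S_def by blast
  have "PU p ?U (\<lambda>E. \<not> cherry m E) = PU p ?U (\<lambda>E. \<forall>v\<in>{..<m}. A v E)" using ev by simp
  also have "\<dots> = (\<Prod>v\<in>{..<m}. PU p (S v) (A v))"
    by (rule PU_indep[OF fU _ sub disj loc]) simp
  also have "\<dots> = (\<Prod>v\<in>{..<m}. (1 - (1 - p^m)^2))"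
  proof (intro prod.cong refl)
    fix v assume v: "v \<in> {..<m}"
    have fS: "finite (S v)" unfolding S_def S1_def S2_def by simp
    have inj1: "inj_on (\<lambda>w. {v,w}) {m..<2*m}" using v by (intro inj_onI) (auto simp: doubleton_eq_iff)
    have inj2: "inj_on (\<lambda>w. {v,w}) {2*m..<3*m}" using v by (intro inj_onI) (auto simp: doubleton_eq_iff)
    have cS1: "card (S1 v) = m" unfolding S1_def using card_image[OF inj1] by simp
    have cS2: "card (S2 v) = m" unfolding S2_def using card_image[OF inj2] by simp
    have d12: "S1 v \<inter> S2 v = {}" unfolding S1_def S2_def using v by (auto simp: doubleton_eq_iff)
    have cS: "card (S1 v \<union> S2 v) = 2*m"
      using card_Un_disjoint[OF _ _ d12] cS1 cS2 unfolding S1_def S2_def by simp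
    have "PU p (S v) (A v) = PU p (S v) (\<lambda>E. S1 v \<subseteq> E) + PU p (S v) (\<lambda>E. S2 v \<subseteq> E) - PU p (S v) (\<lambda>E. S1 v \<union> S2 v \<subseteq> E)"
      unfolding A_def PU_disj by simp
    also have "\<dots> = p^m + p^m - p^(2*m)"
      using PU_all_in[OF fS, of "S1 v" p] PU_all_in[OF fS, of "S2 v" p] PU_all_in[OF fS, of "S1 v \<union> S2 v" p]
        cS1 cS2 cS unfolding S_def by simp
    also have "\<dots> = 1 - (1 - p^m)^2" by (simp add: power2_eq_square power_mult algebra_simps)
    finally show "PU p (S v) (A v) = 1 - (1 - p^m)^2" .
  qed
  also have "\<dots> = (1 - (1 - p^m)^2)^m" by simp
  finally show ?thesis .
qed

lemma cherry_num:
  fixes q :: real and m :: nat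
  assumes q0: "0 \<le> q" and q1: "q \<le> 1" and mq: "m*q \<le> 1"
  shows "(1 - (1 - (1-q)^m)^2)^m \<le> exp (-(real m^3*q^2/4))"
proof -
  define x where "x = real m * q"
  have x0: "0 \<le> x" unfolding x_def using q0 by simp
  have x1: "x \<le> 1" unfolding x_def using mq by simp
  have e1: "1 - q \<le> exp (-q)" using exp_ge_add_one_self[of "-q"] by simp
  have "(1-q)^m \<le> exp (-q)^m" using e1 q1 by (intro power_mono) auto
  also have "\<dots> = exp (- x)" unfolding x_def using exp_of_nat_mult[of m "-q"] by simp
  also have "\<dots> \<le> 1 / (1 + x)"
  proof -
    have "1 + x \<le> exp x" by simp
    then have "1 / exp x \<le> 1 / (1 + x)" using x0 by (intro divide_left_mono) auto
    then show ?thesis by (simp add: exp_minus field_simps)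
  qed
  finally have pm: "(1-q)^m \<le> 1 / (1 + x)" .
  define y where "y = 1 - (1-q)^m"
  have "x/2 \<le> x / (1 + x)" using x0 x1 by (intro divide_left_mono) auto
  also have "x / (1 + x) = 1 - 1/(1+x)" using x0 by (simp add: field_simps)
  also have "\<dots> \<le> y" unfolding y_def using pm by simp
  finally have yx: "x/2 \<le> y" .
  have y1: "y \<le> 1" unfolding y_def using q1 by simp
  have "(x/2)^2 \<le> y^2" using yx x0 by (intro power_mono) auto
  then have b1: "1 - y^2 \<le> 1 - x^2/4" by (simp add: power_divide)
  have b0: "0 \<le> 1 - y^2"
  proof -
    have "0 \<le> y" using yx x0 by simp
    then have "y^2 \<le> 1" using y1 by (simp add: power_le_one)
    then show ?thesis by simp
  qed
  have "1 - x^2/4 \<le> exp (-(x^2/4))" using exp_ge_add_one_self[of "-(x^2/4)"] by simp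
  then have "1 - y^2 \<le> exp (-(x^2/4))" using b1 by simp
  then have "(1 - y^2)^m \<le> exp (-(x^2/4))^m" using b0 by (intro power_mono) auto
  also have "\<dots> = exp (-(real m^3*q^2/4))"
    unfolding x_def using exp_of_nat_mult[of m "-((real m * q)^2/4)"]
    by (simp add: power2_eq_square power3_eq_cube field_simps)
  finally show ?thesis unfolding y_def .
qed

lemma pow2_big: "j \<ge> 8 \<Longrightarrow> 24 * j + 18 < (2::nat)^j"
proof (induction j rule: nat_induct_at_least)
  case base then show ?case by simp
next
  case (Suc j)
  have "(24::nat) \<le> 2^j"
  proof -
    have "(24::nat) \<le> 2^8" by simp
    also have "(2::nat)^8 \<le> 2^j" using Suc.hyps by (intro power_increasing) auto
    finally show ?thesis .
  qed
  then show ?case using Suc.IH by simp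
qed

lemma hd_num: assumes "n \<ge> 32" shows "real n * (1/2)^(n div 4) < 1/6"
proof -
  define j where "j = n div 4"
  have j8: "j \<ge> 8" unfolding j_def using assms by simp
  have "n \<le> 4*j + 3" unfolding j_def by simp
  then have "6*n < 2^j" using pow2_big[OF j8] by simp
  then have "6 * real n < 2^j" by (metis of_nat_less_iff of_nat_mult of_nat_numeral of_nat_power)
  then have "real n * (1/2)^j < 1/6" by (simp add: power_divide field_simps)
  then show ?thesis unfolding j_def .
qed

lemma lb_event:
  assumes EU: "E \<subseteq> all_edges n" and nb: "\<not> bad n E" and nh: "\<not> hideg n t E" and ch: "cherry m E"
    and mn: "3*m \<le> n" and tn: "3*t < n"
  shows "\<exists>W\<subseteq>{0..<n}. card W = 4 \<and> good_set 2 E W \<and> graph_connected W (induced_edges E W)"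
proof -
  obtain v a c where v: "v < m" and a: "a \<in> {m..<2*m}" and c: "c \<in> {2*m..<3*m}"
    and va: "{v,a} \<notin> E" and vc: "{v,c} \<notin> E"
    using ch unfolding cherry_def by blast
  have lt: "v < a" "a < c" "c < n" using v a c mn by auto
  have ac: "{a,c} \<in> E"
  proof (rule ccontr)
    assume "{a,c} \<notin> E"
    then have "bad n E" unfolding bad_def using lt va vc
      by (intro disjI1 exI[of _ v] exI[of _ a] exI[of _ c]) (auto simp: insert_commute)
    then show False using nb by simp
  qed
  define N where "N = (\<lambda>x. {y. y < n \<and> y \<noteq> x \<and> {x,y} \<notin> E})"
  have Nsub: "N x \<subseteq> {0..<n}" for x unfolding N_def by auto
  have fN: "finite (N x)" for x using finite_subset[OF Nsub] by simp
  have cN: "card (N x) < t" if "x < n" for x using nh that unfolding hideg_def N_def by (meson not_le)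
  define B where "B = N v \<union> N a \<union> N c \<union> {v,a,c}"
  have c1: "card B \<le> card (N v \<union> N a \<union> N c) + card {v,a,c}" unfolding B_def by (rule card_Un_le)
  have c2: "card (N v \<union> N a \<union> N c) \<le> card (N v \<union> N a) + card (N c)" by (rule card_Un_le)
  have c3: "card (N v \<union> N a) \<le> card (N v) + card (N a)" by (rule card_Un_le)
  have c4: "card {v,a,c} = 3" using lt by simp
  have "card B < n" using c1 c2 c3 c4 cN[of v] cN[of a] cN[of c] lt tn by linarith
  moreover have Bs: "B \<subseteq> {0..<n}" unfolding B_def using Nsub lt by auto
  have "\<not> {0..<n} \<subseteq> B"
  proof
    assume "{0..<n} \<subseteq> B"
    then have "card {0..<n} \<le> card B" using finite_subset[OF Bs] by (intro card_mono) auto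
    then show False using \<open>card B < n\<close> by simp
  qed
  then obtain d where d: "d < n" "d \<notin> B" by (meson atLeastLessThan_iff subsetI zero_le)
  have dd: "d \<noteq> v" "d \<noteq> a" "d \<noteq> c" using d unfolding B_def by auto
  have ed: "{v,d} \<in> E" "{a,d} \<in> E" "{c,d} \<in> E" using d dd unfolding B_def N_def by auto
  have ds: "distinct [a,v,c,d]" using lt dd by auto
  have ed': "{d,a} \<in> E" "{d,v} \<in> E" "{d,c} \<in> E" using ed by (auto simp: insert_commute)
  have g: "good_set 2 E {a,v,c,d} \<and> graph_connected {a,v,c,d} (induced_edges E {a,v,c,d})"
    by (rule lb_det[OF EU ds va vc ac ed'])
  have "card {a,v,c,d} = 4" using ds by simp
  moreover have "{a,v,c,d} \<subseteq> {0..<n}" using lt d by auto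
  ultimately show ?thesis using g by blast
qed

lemma greatest_4:
  assumes "Q (4::nat)" "\<And>k. Q k \<Longrightarrow> k \<le> 4"
  shows "(if \<exists>k. Q k then GREATEST k. Q k else 0) = 4"
proof -
  have "(GREATEST k. Q k) = 4" by (rule Greatest_equality) (use assms in auto)
  then show ?thesis using assms(1) by auto
qed

lemma main_n:
  fixes P :: real
  assumes p: "0 \<le> P" "P \<le> 1" and n32: "n \<ge> 32" and nq: "real n * (1 - P) \<le> 1/4"
    and big: "(1 - P)^2 * real n^3 \<ge> 1600"
  shows "u_d 2 n P = 4 \<and> u_d' 2 n P = 4"
proof -
  define q where "q = 1 - P"
  have q0: "0 \<le> q" and q1: "q \<le> 1" unfolding q_def using p by auto
  let ?U = "all_edges n"
  have fU: "finite ?U" by (rule fin_edges)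
  define m where "m = n div 3"
  define t where "t = n div 4"
  have mn: "3*m \<le> n" unfolding m_def by simp
  have tn: "3*t < n" unfolding t_def using n32 by simp
  define x where "x = real n * q"
  have x0: "0 \<le> x" unfolding x_def using q0 by simp
  have x1: "x \<le> 1/4" unfolding x_def q_def using nq by simp
  have "PU P ?U (bad n) \<le> real n^3*q^3 + real n^4*q^4 + real n^5*q^5"
    using PU_bad[OF p, of n] unfolding q_def .
  also have "\<dots> = x^3 + x^4 + x^5" unfolding x_def by (simp add: power_mult_distrib)
  also have "\<dots> \<le> (1/4)^3 + (1/4)^4 + (1/4)^5"
    using x0 x1 by (intro add_mono power_mono) auto
  also have "(1/4::real)^3 + (1/4)^4 + (1/4)^5 = 21/1024" by (simp add: power_divide)
  finally have Bbad: "PU P ?U (bad n) < 1/6" by simp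
  have "PU P ?U (hideg n t) \<le> real n * real n ^ t * q^t"
    using PU_hd[OF p, of n t] unfolding q_def .
  also have "\<dots> = real n * x^t" unfolding x_def by (simp add: power_mult_distrib)
  also have "\<dots> \<le> real n * (1/2)^t"
  proof -
    have "x^t \<le> (1/2)^t" using x0 x1 by (intro power_mono) auto
    then show ?thesis by (intro mult_left_mono) auto
  qed
  also have "\<dots> < 1/6" unfolding t_def by (rule hd_num[OF n32])
  finally have Bhd: "PU P ?U (hideg n t) < 1/6" .
  have "PU P ?U (\<lambda>E. \<not> cherry m E) = (1 - (1 - P^m)^2)^m" by (rule PU_nocherry[OF p mn])
  also have "\<dots> = (1 - (1 - (1-q)^m)^2)^m" unfolding q_def by simp
  also have "\<dots> \<le> exp (-(real m^3*q^2/4))"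
  proof (rule cherry_num[OF q0 q1])
    have "real m \<le> real n" unfolding m_def by simp
    then have "real m * q \<le> real n * q" using q0 by (intro mult_right_mono) auto
    then show "real m * q \<le> 1" using x1 unfolding x_def by simp
  qed
  also have "\<dots> < 1/6"
  proof -
    have n4: "n \<le> 4 * m" unfolding m_def using n32 by presburger
    then have "real n / 4 \<le> real m" by simp
    then have "(real n / 4)^3 \<le> real m^3" by (intro power_mono) auto
    then have "(real n / 4)^3 * q^2 \<le> real m^3 * q^2" by (intro mult_right_mono) auto
    moreover have "(real n / 4)^3 * q^2 = (q^2 * real n^3) / 64" by (simp add: power_divide)
    moreover have "q^2 * real n^3 \<ge> 1600" using big unfolding q_def .
    ultimately have z: "25/4 \<le> real m^3*q^2/4" by simp
    define z where "z = real m^3*q^2/4"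
    have e: "1 + z \<le> exp z" by (rule exp_ge_add_one_self)
    have "25/4 \<le> z" using z unfolding z_def .
    then have "6 < exp z" using e by linarith
    then have "exp (-z) < 1/6" by (simp add: exp_minus field_simps)
    then show ?thesis unfolding z_def .
  qed
  finally have Bch: "PU P ?U (\<lambda>E. \<not> cherry m E) < 1/6" .
  have "PU P ?U (\<lambda>E. \<not> cherry m E \<or> (bad n E \<or> hideg n t E)) \<le> PU P ?U (\<lambda>E. \<not> cherry m E) + (PU P ?U (bad n) + PU P ?U (hideg n t))"
    using PU_union[OF p, of ?U "\<lambda>E. \<not> cherry m E" "\<lambda>E. bad n E \<or> hideg n t E"]
      PU_union[OF p, of ?U "bad n" "hideg n t"] by linarith
  then have low: "PU P ?U (\<lambda>E. \<not> (\<not> cherry m E \<or> (bad n E \<or> hideg n t E))) > 1/2"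
    using PU_not[OF fU, of P "\<lambda>E. \<not> cherry m E \<or> (bad n E \<or> hideg n t E)"] Bbad Bhd Bch by linarith
  have L4c: "PU P ?U (\<lambda>E. \<exists>W\<subseteq>{0..<n}. card W = 4 \<and> good_set 2 E W \<and> graph_connected W (induced_edges E W)) > 1/2"
  proof -
    have "PU P ?U (\<lambda>E. \<not> (\<not> cherry m E \<or> (bad n E \<or> hideg n t E))) \<le> PU P ?U (\<lambda>E. \<exists>W\<subseteq>{0..<n}. card W = 4 \<and> good_set 2 E W \<and> graph_connected W (induced_edges E W))"
    proof (rule PU_mono[OF p])
      fix E assume "E \<subseteq> ?U" "\<not> (\<not> cherry m E \<or> (bad n E \<or> hideg n t E))"
      then show "\<exists>W\<subseteq>{0..<n}. card W = 4 \<and> good_set 2 E W \<and> graph_connected W (induced_edges E W)"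
        using lb_event[OF _ _ _ _ mn tn] by blast
    qed
    then show ?thesis using low by linarith
  qed
  have L4: "PU P ?U (\<lambda>E. \<exists>W\<subseteq>{0..<n}. card W = 4 \<and> good_set 2 E W) > 1/2"
  proof -
    have "PU P ?U (\<lambda>E. \<exists>W\<subseteq>{0..<n}. card W = 4 \<and> good_set 2 E W \<and> graph_connected W (induced_edges E W)) \<le> PU P ?U (\<lambda>E. \<exists>W\<subseteq>{0..<n}. card W = 4 \<and> good_set 2 E W)"
      by (rule PU_mono[OF p]) blast
    then show ?thesis using L4c by linarith
  qed
  have U5: "PU P ?U (\<lambda>E. \<exists>W\<subseteq>{0..<n}. card W = k \<and> good_set 2 E W) < 1/2" if "5 \<le> k" for k
  proof -
    have "PU P ?U (\<lambda>E. \<exists>W\<subseteq>{0..<n}. card W = k \<and> good_set 2 E W) \<le> PU P ?U (bad n)"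
    proof (rule PU_mono[OF p])
      fix E assume "\<exists>W\<subseteq>{0..<n}. card W = k \<and> good_set 2 E W"
      then show "bad n E" using ub_det that by blast
    qed
    then show ?thesis using Bbad by linarith
  qed
  have U5c: "PU P ?U (\<lambda>E. \<exists>W\<subseteq>{0..<n}. card W = k \<and> good_set 2 E W \<and> graph_connected W (induced_edges E W)) < 1/2" if "5 \<le> k" for k
  proof -
    have "PU P ?U (\<lambda>E. \<exists>W\<subseteq>{0..<n}. card W = k \<and> good_set 2 E W \<and> graph_connected W (induced_edges E W)) \<le> PU P ?U (\<lambda>E. \<exists>W\<subseteq>{0..<n}. card W = k \<and> good_set 2 E W)"
      by (rule PU_mono[OF p]) blast
    then show ?thesis using U5[OF that] by linarith
  qed
  have A: "u_d 2 n P = 4"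
    unfolding u_d_def Let_def prob_eq
  proof (rule greatest_4)
    show "0 < (4::nat) \<and> 1/2 < PU P ?U (\<lambda>E. \<exists>W\<subseteq>{0..<n}. card W = 4 \<and> good_set 2 E W)" using L4 by simp
  next
    fix k assume "0 < k \<and> 1/2 < PU P ?U (\<lambda>E. \<exists>W\<subseteq>{0..<n}. card W = k \<and> good_set 2 E W)"
    then show "k \<le> 4" using U5[of k] by (cases "5 \<le> k") auto
  qed
  have B: "u_d' 2 n P = 4"
    unfolding u_d'_def Let_def prob_eq
  proof (rule greatest_4)
    show "0 < (4::nat) \<and> 1/2 < PU P ?U (\<lambda>E. \<exists>W\<subseteq>{0..<n}. card W = 4 \<and> good_set 2 E W \<and> graph_connected W (induced_edges E W))" using L4c by simp
  next
    fix k assume "0 < k \<and> 1/2 < PU P ?U (\<lambda>E. \<exists>W\<subseteq>{0..<n}. card W = k \<and> good_set 2 E W \<and> graph_connected W (induced_edges E W))"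
    then show "k \<le> 4" using U5c[of k] by (cases "5 \<le> k") auto
  qed
  show ?thesis using A B by simp
qed

theorem theorem15:
  fixes p :: "nat \<Rightarrow> real"
  assumes prob: "\<And>n. 0 \<le> p n \<and> p n \<le> 1"
    and q_small: "(\<lambda>n. 1 - p n) \<in> o(\<lambda>n. 1 / real n)"
    and q_large: "filterlim (\<lambda>n. (1 - p n) * real n powr 1.5) at_top sequentially"
  shows "\<forall>\<^sub>F n in sequentially. u_d 2 n (p n) = 4 \<and> u_d' 2 n (p n) = 4"
proof -
  have e1: "\<forall>\<^sub>F n in sequentially. (32::nat) \<le> n" by (rule eventually_ge_at_top)
  have e2: "\<forall>\<^sub>F n in sequentially. norm (1 - p n) \<le> (1/4) * norm (1 / real n)"
    using landau_o.smallD[OF q_small, of "1/4"] by simp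
  have e3: "\<forall>\<^sub>F n in sequentially. 40 \<le> (1 - p n) * real n powr 1.5"
    using q_large unfolding filterlim_at_top by blast
  show ?thesis
  proof (rule eventually_mono[OF eventually_conj[OF e1 eventually_conj[OF e2 e3]]])
    fix n :: nat
    assume h: "32 \<le> n \<and> norm (1 - p n) \<le> (1/4) * norm (1 / real n) \<and> 40 \<le> (1 - p n) * real n powr 1.5"
    have p0: "0 \<le> p n" and p1: "p n \<le> 1" using prob[of n] by auto
    have npos: "0 < real n" using h by simp
    have q0: "0 \<le> 1 - p n" using p1 by simp
    have "1 - p n \<le> (1/4) * (1 / real n)" using h q0 npos by simp
    then have nq: "real n * (1 - p n) \<le> 1/4" using npos by (simp add: field_simps)
    define y where "y = (1 - p n) * real n powr 1.5"
    have y40: "40 \<le> y" using h unfolding y_def by simp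
    have "(40::real)^2 \<le> y^2" using y40 by (intro power_mono) auto
    moreover have "y^2 = (1 - p n)^2 * real n^3"
    proof -
      have "(real n powr 1.5)^2 = real n powr 1.5 * real n powr 1.5" by (simp add: power2_eq_square)
      also have "\<dots> = real n powr (1.5 + 1.5)" by (rule powr_add[symmetric])
      also have "\<dots> = real n ^ 3" using npos by simp
      finally show ?thesis unfolding y_def by (simp add: power_mult_distrib)
    qed
    ultimately have big: "(1 - p n)^2 * real n^3 \<ge> 1600" by simp
    show "u_d 2 n (p n) = 4 \<and> u_d' 2 n (p n) = 4"
      by (rule main_n[OF p0 p1 _ nq big]) (use h in simp)
  qed
qed

end
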